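(* Let $R(n)$ be the range of $n$ steps of simple symmetric random walk on $\mathbb{Z}^d$ started at $0$. There exist constants $c_d>0$ such that for all integers $n\ge 2$, $$\mathbb{E}\big[|\partial R(n)|\big]\ge \begin{cases} c_2\,\dfrac{n}{\log^2 n}, & d=2,\\[2mm] c_d\, n, & d\ge 3.\end{cases}$$
   Context: The range is $R(n)=\{S(0),\ldots,S(n)\}$. The inner boundary of $A\subset\mathbb{Z}^d$ is $\partial A=\{z\in A : z \text{ is at graph distance } 1 \text{ from some vertex of } \mathbb{Z}^d\setminus A\}$. *)

theory Defs
  imports Complex_Main
begin

text \<open>Points of Z^d are represented as functions nat => int vanishing outside {..<d}.\<close>

definition lattice :: "nat \<Rightarrow> (nat \<Rightarrow> int) set" where
  "lattice d = {x. \<forall>j\<ge>d. x j = 0}"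

definition adjacent :: "nat \<Rightarrow> (nat \<Rightarrow> int) \<Rightarrow> (nat \<Rightarrow> int) \<Rightarrow> bool" where
  "adjacent d x y \<longleftrightarrow> x \<in> lattice d \<and> y \<in> lattice d \<and> (\<Sum>j<d. \<bar>x j - y j\<bar>) = 1"

definition inner_boundary :: "nat \<Rightarrow> (nat \<Rightarrow> int) set \<Rightarrow> (nat \<Rightarrow> int) set" where
  "inner_boundary d A = {z \<in> A. \<exists>y \<in> lattice d - A. adjacent d z y}"

definition unit_steps :: "nat \<Rightarrow> (nat \<Rightarrow> int) set" where
  "unit_steps d = {(\<lambda>j. if j = i then s else 0) | i s. i < d \<and> (s = 1 \<or> s = -1)}"

definition walk_pos :: "(nat \<Rightarrow> int) list \<Rightarrow> nat \<Rightarrow> (nat \<Rightarrow> int)" where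
  "walk_pos xs k = (\<lambda>j. \<Sum>i<k. (xs ! i) j)"

definition walk_range :: "(nat \<Rightarrow> int) list \<Rightarrow> nat \<Rightarrow> (nat \<Rightarrow> int) set" where
  "walk_range xs n = walk_pos xs ` {0..n}"

text \<open>All step sequences of length n; under simple symmetric random walk each has
  probability (2d)^(-n), i.e. the law of the first n increments is uniform on this set.\<close>
definition step_seqs :: "nat \<Rightarrow> nat \<Rightarrow> (nat \<Rightarrow> int) list set" where
  "step_seqs d n = {xs. length xs = n \<and> set xs \<subseteq> unit_steps d}"

definition expected_boundary :: "nat \<Rightarrow> nat \<Rightarrow> real" where
  "expected_boundary d n =
     (\<Sum>xs\<in>step_seqs d n. real (card (inner_boundary d (walk_range xs n)))) / (2 * real d) ^ n"

end

theory Submission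
  imports Defs "HOL-Library.Function_Algebras" "HOL-Analysis.Convex"
begin

lemma wp_apply: "walk_pos xs k j = (\<Sum>i<k. (xs ! i) j)"
  by (simp add: walk_pos_def)

lemma wp_0[simp]: "walk_pos xs 0 = 0"
  by (rule ext) (simp add: walk_pos_def)

lemma wp_Suc: "walk_pos xs (Suc k) = walk_pos xs k + xs ! k"
  by (rule ext) (simp add: walk_pos_def)

lemma wp_append_left: "i \<le> length ys \<Longrightarrow> walk_pos (ys @ zs) i = walk_pos ys i"
  by (rule ext) (auto simp add: walk_pos_def nth_append intro!: sum.cong)

lemma wp_append_right:
  "walk_pos (ys @ zs) (length ys + i) = walk_pos ys (length ys) + walk_pos zs i"
proof (induction i)
  case 0 then show ?case by (simp add: wp_append_left)
next
  case (Suc i) then show ?case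
    by (simp add: wp_Suc[of "ys@zs" "length ys + i", simplified] wp_Suc[of zs i] nth_append add.assoc)
qed

lemma wp_Cons: "walk_pos (y # ys) (Suc t) = y + walk_pos ys t"
proof (induction t)
  case 0 then show ?case by (simp add: wp_Suc)
next
  case (Suc t) then show ?case by (simp add: wp_Suc[of "y#ys" "Suc t"] wp_Suc[of ys t] add.assoc)
qed

lemma wp_map:
  assumes "\<And>a b. h (a + b) = h a + h b" "h 0 = 0" "i \<le> length xs"
  shows "walk_pos (map h xs) i = h (walk_pos xs i)"
  using assms(3)
proof (induction i)
  case 0 then show ?case using assms(2) by (simp only: wp_0 list.map)
next
  case (Suc i)
  then have "walk_pos (map h xs) i = h (walk_pos xs i)" by simp
  moreover have "map h xs ! i = h (xs ! i)" using Suc.prems by simp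
  ultimately show ?case unfolding wp_Suc assms(1) by simp
qed

lemma wp_rev_neg:
  "i \<le> length ys \<Longrightarrow> walk_pos (rev (map uminus ys)) i = walk_pos ys (length ys - i) - walk_pos ys (length ys)"
proof (induction ys arbitrary: i)
  case Nil then show ?case by simp
next
  case (Cons y ys)
  show ?case
  proof (cases "i \<le> length ys")
    case True
    then have "walk_pos (rev (map uminus (y#ys))) i = walk_pos (rev (map uminus ys)) i"
      by (simp add: wp_append_left)
    also have "\<dots> = walk_pos ys (length ys - i) - walk_pos ys (length ys)" by (rule Cons.IH[OF True])
    also have "\<dots> = walk_pos (y#ys) (length (y#ys) - i) - walk_pos (y#ys) (length (y#ys))"
      using True by (simp add: Suc_diff_le wp_Cons)
    finally show ?thesis .
  next
    case False
    then have i: "i = Suc (length ys)" using Cons by simp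
    have "walk_pos (rev (map uminus (y#ys))) i = walk_pos (rev (map uminus ys)) (length ys) + walk_pos [-y] 1"
      using wp_append_right[of "rev (map uminus ys)" "[-y]" 1] i by simp
    also have "\<dots> = - walk_pos ys (length ys) - y" unfolding Cons.IH[of "length ys", OF order.refl]
      by (simp add: wp_Suc)
    also have "\<dots> = walk_pos (y#ys) (length (y#ys) - i) - walk_pos (y#ys) (length (y#ys))"
      using i by (simp add: wp_Cons)
    finally show ?thesis .
  qed
qed

definition e0 :: "nat \<Rightarrow> int" where "e0 = (\<lambda>j. if j = 0 then 1 else 0)"

definition escset :: "nat \<Rightarrow> nat \<Rightarrow> (nat \<Rightarrow> int) list set" where
  "escset d m = {zs \<in> step_seqs d m. \<forall>i\<in>{1..m}. walk_pos zs i \<noteq> 0 \<and> walk_pos zs i \<noteq> e0}"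

definition esc :: "nat \<Rightarrow> nat \<Rightarrow> nat" where "esc d m = card (escset d m)"

definition hitset :: "nat \<Rightarrow> nat \<Rightarrow> (nat \<Rightarrow> int) \<Rightarrow> (nat \<Rightarrow> int) list set" where
  "hitset d j x = {ws \<in> step_seqs d j. walk_pos ws j = x}"

definition hitc :: "nat \<Rightarrow> nat \<Rightarrow> (nat \<Rightarrow> int) \<Rightarrow> nat" where "hitc d j x = card (hitset d j x)"

lemma e0_ne0[simp]: "e0 \<noteq> 0"
proof
  assume "e0 = 0" then have "e0 0 = 0 0" by simp
  then show False by (simp add: e0_def)
qed

lemma finite_U: "finite (unit_steps d)"
proof -
  have "unit_steps d = (\<lambda>(i,s). (\<lambda>j. if j = i then s else 0)) ` ({..<d} \<times> {1,-1})"
    unfolding unit_steps_def by auto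
  then show ?thesis by simp
qed

lemma card_U: "card (unit_steps d) = 2 * d"
proof -
  have eq: "unit_steps d = (\<lambda>(i,s). (\<lambda>j. if j = i then s else 0)) ` ({..<d} \<times> {1,-1::int})"
    unfolding unit_steps_def by auto
  have "inj_on (\<lambda>(i,s). (\<lambda>j. if j = i then s else (0::int))) ({..<d} \<times> {1,-1::int})"
  proof (rule inj_onI, clarify)
    fix i s i' s' assume h: "(\<lambda>j. if j = i then s else (0::int)) = (\<lambda>j. if j = i' then s' else 0)"
      and s: "s \<in> {1,-1}" "s' \<in> {1,-1}"
    have "i = i'"
    proof (rule ccontr)
      assume "i \<noteq> i'"
      then have "(if i = i then s else 0) = (if i = i' then s' else (0::int))" using h by metis
      then show False using s \<open>i \<noteq> i'\<close> by auto
    qed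
    moreover have "s = s'" using fun_cong[OF h, of i] \<open>i = i'\<close> by simp
    ultimately show "i = i' \<and> s = s'" by simp
  qed
  then have "card (unit_steps d) = card ({..<d} \<times> {1,-1::int})" unfolding eq by (rule card_image)
  then show ?thesis by simp
qed

lemma U_uminus: "u \<in> unit_steps d \<Longrightarrow> - u \<in> unit_steps d"
proof -
  assume "u \<in> unit_steps d"
  then obtain i s where u: "u = (\<lambda>j. if j = i then s else 0)" "i < d" "s = 1 \<or> s = -1"
    unfolding unit_steps_def by blast
  have "- u = (\<lambda>j. if j = i then -s else 0)" unfolding u by (rule ext) simp
  moreover have "-s = 1 \<or> -s = -1" using u(3) by auto
  ultimately show ?thesis unfolding unit_steps_def using u(2) by blast
qed

lemma finite_W: "finite (step_seqs d m)"
  unfolding step_seqs_def using finite_lists_length_eq[OF finite_U] by (simp add: conj_commute)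

lemma card_W: "card (step_seqs d m) = (2 * d) ^ m"
  unfolding step_seqs_def using card_lists_length_eq[OF finite_U, of d m] card_U
  by (simp add: conj_commute)

lemma W_append: "ys \<in> step_seqs d k \<Longrightarrow> zs \<in> step_seqs d l \<Longrightarrow> ys @ zs \<in> step_seqs d (k + l)"
  unfolding step_seqs_def by auto

lemma W_take: "xs \<in> step_seqs d n \<Longrightarrow> k \<le> n \<Longrightarrow> take k xs \<in> step_seqs d k"
  unfolding step_seqs_def by (auto dest: in_set_takeD)

lemma W_drop: "xs \<in> step_seqs d n \<Longrightarrow> drop k xs \<in> step_seqs d (n - k)"
  unfolding step_seqs_def by (auto dest: in_set_dropD)

lemma inj_append: "inj_on (\<lambda>(ys, zs). ys @ zs) (step_seqs d k \<times> B)"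
proof (rule inj_onI, clarify)
  fix ys zs ys' zs' assume "ys \<in> step_seqs d k" "ys' \<in> step_seqs d k" "ys @ zs = ys' @ zs'"
  then show "ys = ys' \<and> zs = zs'" unfolding step_seqs_def by (simp add: append_eq_append_conv)
qed

lemma card_append_image:
  assumes "A \<subseteq> step_seqs d k" "finite B"
  shows "card ((\<lambda>(ys, zs). ys @ zs) ` (A \<times> B)) = card A * card B"
proof -
  have "inj_on (\<lambda>(ys, zs). ys @ zs) (A \<times> B)"
    by (rule inj_on_subset[OF inj_append[of d k B]]) (use assms in auto)
  then show ?thesis by (simp add: card_image card_cartesian_product)
qed

lemma finite_escset: "finite (escset d m)"
  unfolding escset_def using finite_W by simp
lemma finite_hitset: "finite (hitset d m x)"
  unfolding hitset_def using finite_W by simp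

lemma wp_lattice:
  assumes "set xs \<subseteq> unit_steps d" "i \<le> length xs"
  shows "walk_pos xs i \<in> lattice d"
  using assms(2)
proof (induction i)
  case 0 then show ?case by (simp add: lattice_def)
next
  case (Suc i)
  have "xs ! i \<in> unit_steps d" using assms(1) Suc.prems by auto
  then have "\<forall>j\<ge>d. (xs ! i) j = 0" unfolding unit_steps_def by auto
  moreover have "\<forall>j\<ge>d. walk_pos xs i j = 0" using Suc by (simp add: lattice_def)
  ultimately show ?case by (simp add: lattice_def wp_Suc)
qed

definition refl0 :: "(nat \<Rightarrow> int) \<Rightarrow> (nat \<Rightarrow> int)" where "refl0 u = u(0 := - u 0)"

lemma refl0_add: "refl0 (a + b) = refl0 a + refl0 b"
  by (rule ext) (simp add: refl0_def)
lemma refl0_zero: "refl0 0 = 0"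
  by (rule ext) (simp add: refl0_def)
lemma refl0_refl0[simp]: "refl0 (refl0 a) = a"
  by (rule ext) (simp add: refl0_def)
lemma refl0_e0: "refl0 e0 = - e0"
  by (rule ext) (simp add: refl0_def e0_def)

lemma refl0_U: "u \<in> unit_steps d \<Longrightarrow> refl0 u \<in> unit_steps d"
proof -
  assume "u \<in> unit_steps d"
  then obtain i s where u: "u = (\<lambda>j. if j = i then s else 0)" "i < d" "s = 1 \<or> s = -1"
    unfolding unit_steps_def by blast
  show ?thesis
  proof (cases "i = 0")
    case True
    have "refl0 u = (\<lambda>j. if j = i then -s else 0)" unfolding u refl0_def using True by (rule_tac ext) simp
    moreover have "-s = 1 \<or> -s = -1" using u(3) by auto
    ultimately show ?thesis unfolding unit_steps_def using u(2) by blast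
  next
    case False
    have "refl0 u = u" unfolding u refl0_def using False by (rule_tac ext) simp
    then show ?thesis using \<open>u \<in> unit_steps d\<close> by simp
  qed
qed

definition escset' :: "nat \<Rightarrow> nat \<Rightarrow> (nat \<Rightarrow> int) list set" where
  "escset' d m = {zs \<in> step_seqs d m. \<forall>i\<in>{1..m}. e0 + walk_pos zs i \<noteq> 0 \<and> e0 + walk_pos zs i \<noteq> e0}"

lemma card_escset': "card (escset' d m) \<le> esc d m"
proof -
  have inj: "inj_on (map refl0) (escset' d m)"
  proof -
    have "inj refl0" by (rule inj_onI) (metis refl0_refl0)
    then have "inj (map refl0)" by (rule inj_mapI)
    then show ?thesis by (rule inj_on_subset) simp
  qed
  have sub: "map refl0 ` escset' d m \<subseteq> escset d m"
  proof
    fix ys assume "ys \<in> map refl0 ` escset' d m"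
    then obtain zs where ys: "ys = map refl0 zs" and zs: "zs \<in> escset' d m" by blast
    have len: "length zs = m" and su: "set zs \<subseteq> unit_steps d"
      using zs by (auto simp: escset'_def step_seqs_def)
    have "ys \<in> step_seqs d m" using len su refl0_U unfolding ys step_seqs_def by auto
    moreover have "\<forall>i\<in>{1..m}. walk_pos ys i \<noteq> 0 \<and> walk_pos ys i \<noteq> e0"
    proof
      fix i assume i: "i \<in> {1..m}"
      have wp: "walk_pos ys i = refl0 (walk_pos zs i)" unfolding ys
        by (rule wp_map) (use refl0_add refl0_zero i len in auto)
      have c: "e0 + walk_pos zs i \<noteq> 0" "e0 + walk_pos zs i \<noteq> e0" using zs i by (auto simp: escset'_def)
      have "walk_pos ys i \<noteq> 0"
      proof
        assume "walk_pos ys i = 0"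
        then have "walk_pos zs i = 0" using wp refl0_refl0 refl0_zero by metis
        then show False using c(2) by simp
      qed
      moreover have "walk_pos ys i \<noteq> e0"
      proof
        assume "walk_pos ys i = e0"
        then have "walk_pos zs i = - e0" using wp refl0_refl0 refl0_e0 by metis
        then show False using c(1) by simp
      qed
      ultimately show "walk_pos ys i \<noteq> 0 \<and> walk_pos ys i \<noteq> e0" by simp
    qed
    ultimately show "ys \<in> escset d m" unfolding escset_def by simp
  qed
  have "card (escset' d m) = card (map refl0 ` escset' d m)" using inj by (simp add: card_image)
  also have "\<dots> \<le> card (escset d m)" by (rule card_mono[OF finite_escset sub])
  finally show ?thesis unfolding esc_def .
qed

lemma finite_escset': "finite (escset' d m)"
  unfolding escset'_def using finite_W by simp

lemma last_exit_cover:
  "step_seqs d M \<subseteq> (\<Union>j\<in>{..M}. (\<lambda>(ys, zs). ys @ zs) ` (hitset d j 0 \<times> escset d (M - j))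
                               \<union> (\<lambda>(ys, zs). ys @ zs) ` (hitset d j e0 \<times> escset' d (M - j)))"
proof
  fix xs assume xs: "xs \<in> step_seqs d M"
  let ?J = "{j \<in> {..M}. walk_pos xs j = 0 \<or> walk_pos xs j = e0}"
  define L where "L = Max ?J"
  have fin: "finite ?J" by simp
  have "0 \<in> ?J" by simp
  then have LJ: "L \<in> ?J" unfolding L_def using fin by (intro Max_in) auto
  have Lmax: "\<And>j. j \<in> ?J \<Longrightarrow> j \<le> L" unfolding L_def using fin by simp
  define ys where "ys = take L xs"
  define zs where "zs = drop L xs"
  have LM: "L \<le> M" using LJ by simp
  have lenxs: "length xs = M" using xs by (simp add: step_seqs_def)
  have xs_eq: "xs = ys @ zs" unfolding ys_def zs_def by simp
  have lys: "length ys = L" unfolding ys_def using LM lenxs by simp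
  have ysW: "ys \<in> step_seqs d L" unfolding ys_def by (rule W_take[OF xs LM])
  have zsW: "zs \<in> step_seqs d (M - L)" unfolding zs_def by (rule W_drop[OF xs])
  have wpys: "walk_pos ys L = walk_pos xs L" unfolding xs_eq using lys by (simp add: wp_append_left)
  have after: "walk_pos ys L + walk_pos zs i \<noteq> 0 \<and> walk_pos ys L + walk_pos zs i \<noteq> e0"
    if i: "i \<in> {1..M - L}" for i
  proof -
    have "walk_pos xs (L + i) = walk_pos ys L + walk_pos zs i"
      unfolding xs_eq using wp_append_right[of ys zs i] lys by simp
    moreover have "L + i \<notin> ?J" using Lmax[of "L+i"] i by auto
    ultimately show ?thesis using i by auto
  qed
  show "xs \<in> (\<Union>j\<in>{..M}. (\<lambda>(ys, zs). ys @ zs) ` (hitset d j 0 \<times> escset d (M - j))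
                               \<union> (\<lambda>(ys, zs). ys @ zs) ` (hitset d j e0 \<times> escset' d (M - j)))"
  proof (cases "walk_pos xs L = 0")
    case True
    have "ys \<in> hitset d L 0" using ysW wpys True by (simp add: hitset_def)
    moreover have "zs \<in> escset d (M - L)" using zsW after wpys True by (simp add: escset_def)
    ultimately show ?thesis using LM xs_eq by blast
  next
    case False
    then have e: "walk_pos xs L = e0" using LJ by simp
    have "ys \<in> hitset d L e0" using ysW wpys e by (simp add: hitset_def)
    moreover have "zs \<in> escset' d (M - L)" using zsW after wpys e by (simp add: escset'_def)
    ultimately show ?thesis using LM xs_eq by blast
  qed
qed

lemma last_exit:
  "(2 * d) ^ M \<le> (\<Sum>j\<le>M. (hitc d j 0 + hitc d j e0) * esc d (M - j))"
proof -
  let ?f = "\<lambda>j. (\<lambda>(ys, zs). ys @ zs) ` (hitset d j 0 \<times> escset d (M - j))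
               \<union> (\<lambda>(ys, zs). ys @ zs) ` (hitset d j e0 \<times> escset' d (M - j))"
  have "(2 * d) ^ M = card (step_seqs d M)" by (simp add: card_W)
  also have "\<dots> \<le> card (\<Union>j\<in>{..M}. ?f j)"
    by (rule card_mono[OF _ last_exit_cover]) (simp add: finite_hitset finite_escset finite_escset')
  also have "\<dots> \<le> (\<Sum>j\<le>M. card (?f j))" by (rule card_UN_le) simp
  also have "\<dots> \<le> (\<Sum>j\<le>M. (hitc d j 0 + hitc d j e0) * esc d (M - j))"
  proof (rule sum_mono)
    fix j assume "j \<in> {..M}"
    have h1: "hitset d j 0 \<subseteq> step_seqs d j" "hitset d j e0 \<subseteq> step_seqs d j"
      by (auto simp: hitset_def)
    have "card (?f j) \<le> card ((\<lambda>(ys, zs). ys @ zs) ` (hitset d j 0 \<times> escset d (M - j)))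
        + card ((\<lambda>(ys, zs). ys @ zs) ` (hitset d j e0 \<times> escset' d (M - j)))" by (rule card_Un_le)
    also have "\<dots> = hitc d j 0 * esc d (M - j) + hitc d j e0 * card (escset' d (M - j))"
      unfolding hitc_def esc_def
      by (simp add: card_append_image[OF h1(1) finite_escset] card_append_image[OF h1(2) finite_escset'])
    also have "\<dots> \<le> hitc d j 0 * esc d (M - j) + hitc d j e0 * esc d (M - j)"
      using card_escset' by (simp add: mult_le_mono2)
    finally show "card (?f j) \<le> (hitc d j 0 + hitc d j e0) * esc d (M - j)" by (simp add: algebra_simps)
  qed
  finally show ?thesis .
qed

lemma esc_mono: "esc d (m + t) \<le> (2 * d) ^ t * esc d m"
proof -
  let ?g = "\<lambda>zs. (take m zs, drop m zs)"
  have inj: "inj_on ?g (escset d (m + t))"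
  proof (rule inj_onI)
    fix a b assume "(take m a, drop m a) = (take m b, drop m b)"
    then have "take m a @ drop m a = take m b @ drop m b" by simp
    then show "a = b" by simp
  qed
  have sub: "?g ` escset d (m + t) \<subseteq> escset d m \<times> step_seqs d t"
  proof (rule image_subsetI)
    fix zs assume zs: "zs \<in> escset d (m + t)"
    have zW: "zs \<in> step_seqs d (m + t)" using zs by (simp add: escset_def)
    have tW: "take m zs \<in> step_seqs d m" by (rule W_take[OF zW]) simp
    have lt: "length (take m zs) = m" using tW by (simp add: step_seqs_def)
    have "\<forall>i\<in>{1..m}. walk_pos (take m zs) i \<noteq> 0 \<and> walk_pos (take m zs) i \<noteq> e0"
    proof
      fix i assume i: "i \<in> {1..m}"
      have "walk_pos zs i = walk_pos (take m zs) i"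
        using wp_append_left[of i "take m zs" "drop m zs"] lt i zW by (simp add: step_seqs_def)
      then show "walk_pos (take m zs) i \<noteq> 0 \<and> walk_pos (take m zs) i \<noteq> e0"
        using zs i by (auto simp: escset_def)
    qed
    then have "take m zs \<in> escset d m" using tW by (simp add: escset_def)
    moreover have "drop m zs \<in> step_seqs d t" using W_drop[OF zW, of m] by simp
    ultimately show "(take m zs, drop m zs) \<in> escset d m \<times> step_seqs d t" by simp
  qed
  have "esc d (m + t) = card (?g ` escset d (m + t))" unfolding esc_def using inj by (simp add: card_image)
  also have "\<dots> \<le> card (escset d m \<times> step_seqs d t)"
    by (rule card_mono[OF _ sub]) (simp add: finite_escset finite_W)
  also have "\<dots> = (2 * d) ^ t * esc d m" by (simp add: card_cartesian_product card_W esc_def)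
  finally show ?thesis .
qed

definition Kset :: "(nat \<Rightarrow> int) list \<Rightarrow> nat \<Rightarrow> nat set" where
  "Kset xs n = {k \<in> {..n}. (\<forall>i\<le>k. walk_pos xs i \<noteq> walk_pos xs k + e0) \<and>
      (\<forall>i\<in>{k<..n}. walk_pos xs i \<noteq> walk_pos xs k \<and> walk_pos xs i \<noteq> walk_pos xs k + e0)}"

lemma e0_lattice: "d \<ge> 1 \<Longrightarrow> e0 \<in> lattice d"
  by (simp add: lattice_def e0_def)

lemma lattice_add: "a \<in> lattice d \<Longrightarrow> b \<in> lattice d \<Longrightarrow> a + b \<in> lattice d"
  by (simp add: lattice_def)

lemma sum_e0: "d \<ge> 1 \<Longrightarrow> (\<Sum>j<d. \<bar>e0 j\<bar>) = 1"
proof -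
  assume "d \<ge> 1"
  have "(\<Sum>j<d. \<bar>e0 j\<bar>) = (\<Sum>j<d. if j = 0 then 1 else 0)"
    by (rule sum.cong) (auto simp: e0_def)
  also have "\<dots> = 1" using \<open>d \<ge> 1\<close> by simp
  finally show ?thesis .
qed

lemma KsetD:
  assumes "k \<in> Kset xs n"
  shows "k \<le> n" "\<And>i. i \<le> k \<Longrightarrow> walk_pos xs i \<noteq> walk_pos xs k + e0"
    "\<And>i. k < i \<Longrightarrow> i \<le> n \<Longrightarrow> walk_pos xs i \<noteq> walk_pos xs k"
    "\<And>i. k < i \<Longrightarrow> i \<le> n \<Longrightarrow> walk_pos xs i \<noteq> walk_pos xs k + e0"
  using assms unfolding Kset_def by simp_all

lemma grp1: "(a::'a::ab_group_add) - b = - b + e \<Longrightarrow> a = e"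
proof -
  assume "a - b = - b + e"
  then have "a + - b = e + - b" by (simp add: algebra_simps)
  then show "a = e" by simp
qed

lemma card_Kset:
  assumes d: "d \<ge> 1" and xs: "xs \<in> step_seqs d n"
  shows "card (Kset xs n) \<le> card (inner_boundary d (walk_range xs n))"
proof -
  let ?S = "walk_pos xs"
  have len: "length xs = n" and su: "set xs \<subseteq> unit_steps d" using xs by (auto simp: step_seqs_def)
  have inj: "inj_on ?S (Kset xs n)"
  proof (rule inj_onI)
    fix a b assume a: "a \<in> Kset xs n" and b: "b \<in> Kset xs n" and eq: "?S a = ?S b"
    show "a = b"
    proof (rule ccontr)
      assume "a \<noteq> b"
      then consider "a < b" | "b < a" by linarith
      then show False
      proof cases
        case 1 then show False using KsetD(3)[OF a 1 KsetD(1)[OF b]] eq by simp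
      next
        case 2 then show False using KsetD(3)[OF b 2 KsetD(1)[OF a]] eq by simp
      qed
    qed
  qed
  have sub: "?S ` Kset xs n \<subseteq> inner_boundary d (walk_range xs n)"
  proof
    fix z assume "z \<in> ?S ` Kset xs n"
    then obtain k where k: "k \<in> Kset xs n" and z: "z = ?S k" by blast
    have kn: "k \<le> n" using KsetD(1)[OF k] .
    have zR: "z \<in> walk_range xs n" unfolding walk_range_def z using kn by simp
    have zL: "z \<in> lattice d" unfolding z by (rule wp_lattice[OF su]) (use kn len in simp)
    have yL: "z + e0 \<in> lattice d" by (rule lattice_add[OF zL e0_lattice[OF d]])
    have yR: "z + e0 \<notin> walk_range xs n"
    proof
      assume "z + e0 \<in> walk_range xs n"
      then obtain i where i: "i \<in> {0..n}" "z + e0 = ?S i" unfolding walk_range_def by (rule imageE)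
      show False
      proof (cases "i \<le> k")
        case True then show False using KsetD(2)[OF k True] i z by simp
      next
        case False then show False using KsetD(4)[OF k, of i] i z by simp
      qed
    qed
    have adj: "adjacent d z (z + e0)"
      unfolding adjacent_def using zL yL sum_e0[OF d] by simp
    show "z \<in> inner_boundary d (walk_range xs n)"
    proof -
      have "z + e0 \<in> lattice d - walk_range xs n" using yL yR by (rule DiffI)
      then have "\<exists>y\<in>lattice d - walk_range xs n. adjacent d z y" using adj by blast
      then show ?thesis unfolding inner_boundary_def using zR by simp
    qed
  qed
  have fin: "finite (inner_boundary d (walk_range xs n))"
  proof (rule finite_subset)
    show "inner_boundary d (walk_range xs n) \<subseteq> walk_range xs n" unfolding inner_boundary_def by (rule subsetI) simp
    show "finite (walk_range xs n)" unfolding walk_range_def by simp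
  qed
  have "card (Kset xs n) = card (?S ` Kset xs n)" using inj by (simp add: card_image)
  also have "\<dots> \<le> card (inner_boundary d (walk_range xs n))" by (rule card_mono[OF fin sub])
  finally show ?thesis .
qed

lemma sum_indicator_card:
  "finite A \<Longrightarrow> (\<Sum>x\<in>A. if P x then 1 else 0 :: nat) = card {x\<in>A. P x}"
  by (simp add: sum.If_cases Int_def conj_commute)

lemma Kset_sum:
  "(\<Sum>xs\<in>step_seqs d n. card (Kset xs n)) = (\<Sum>k\<le>n. card {xs \<in> step_seqs d n. k \<in> Kset xs n})"
proof -
  have "(\<Sum>xs\<in>step_seqs d n. card (Kset xs n)) = (\<Sum>xs\<in>step_seqs d n. \<Sum>k\<le>n. if k \<in> Kset xs n then 1 else 0)"
  proof (rule sum.cong[OF refl])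
    fix xs
    have "Kset xs n \<subseteq> {..n}" by (auto simp: Kset_def)
    then have "{k \<in> {..n}. k \<in> Kset xs n} = Kset xs n" by blast
    then show "card (Kset xs n) = (\<Sum>k\<le>n. if k \<in> Kset xs n then 1 else 0)"
      by (simp add: sum_indicator_card)
  qed
  also have "\<dots> = (\<Sum>k\<le>n. \<Sum>xs\<in>step_seqs d n. if k \<in> Kset xs n then 1 else 0)"
    by (rule sum.swap)
  also have "\<dots> = (\<Sum>k\<le>n. card {xs \<in> step_seqs d n. k \<in> Kset xs n})"
    by (simp add: sum_indicator_card finite_W)
  finally show ?thesis .
qed

lemma Kset_member:
  assumes ys: "ys \<in> escset d k" and zs: "zs \<in> escset d (n - k)" and kn: "k \<le> n"
  shows "rev (map uminus ys) @ zs \<in> step_seqs d n"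
    and "k \<in> Kset (rev (map uminus ys) @ zs) n"
proof -
  let ?r = "rev (map uminus ys)"
  let ?x = "?r @ zs"
  have lys: "length ys = k" and sys: "set ys \<subseteq> unit_steps d" using ys by (auto simp: escset_def step_seqs_def)
  have rW: "?r \<in> step_seqs d k" using lys sys by (auto simp: step_seqs_def intro!: U_uminus)
  have zW: "zs \<in> step_seqs d (n - k)" using zs by (simp add: escset_def)
  show "?x \<in> step_seqs d n" using W_append[OF rW zW] kn by simp
  have lr: "length ?r = k" using lys by simp
  have past: "walk_pos ?x i = walk_pos ys (k - i) - walk_pos ys k" if "i \<le> k" for i
    using wp_append_left[of i ?r zs] wp_rev_neg[of i ys] that lys by simp
  have xk: "walk_pos ?x k = - walk_pos ys k" using past[of k] by simp
  have fut: "walk_pos ?x (k + t) = walk_pos ?x k + walk_pos zs t" for t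
    using wp_append_right[of ?r zs t] lr wp_append_left[of k ?r zs] by simp
  have A: "\<forall>i\<le>k. walk_pos ?x i \<noteq> walk_pos ?x k + e0"
  proof (intro allI impI)
    fix i assume i: "i \<le> k"
    show "walk_pos ?x i \<noteq> walk_pos ?x k + e0"
    proof
      assume h: "walk_pos ?x i = walk_pos ?x k + e0"
      have "walk_pos ys (k - i) = e0"
      proof -
        have "walk_pos ys (k - i) - walk_pos ys k = - walk_pos ys k + e0" using h past[OF i] xk by simp
        then show ?thesis by (rule grp1)
      qed
      moreover have "walk_pos ys (k - i) \<noteq> e0"
      proof (cases "i = k")
        case True then show ?thesis by simp
      next
        case False then have "k - i \<in> {1..k}" using i by auto
        then show ?thesis using ys by (auto simp: escset_def)
      qed
      ultimately show False by simp
    qed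
  qed
  have B: "\<forall>i\<in>{k<..n}. walk_pos ?x i \<noteq> walk_pos ?x k \<and> walk_pos ?x i \<noteq> walk_pos ?x k + e0"
  proof
    fix i assume i: "i \<in> {k<..n}"
    define t where "t = i - k"
    have it: "i = k + t" and t: "t \<in> {1..n-k}" using i by (auto simp: t_def)
    have c: "walk_pos zs t \<noteq> 0" "walk_pos zs t \<noteq> e0" using zs t by (auto simp: escset_def)
    show "walk_pos ?x i \<noteq> walk_pos ?x k \<and> walk_pos ?x i \<noteq> walk_pos ?x k + e0"
      unfolding it fut using c by simp
  qed
  show "k \<in> Kset ?x n" unfolding Kset_def using A B kn by simp
qed

lemma boundary_lower:
  assumes d: "d \<ge> 1"
  shows "(\<Sum>k\<le>n. esc d k * esc d (n - k)) \<le>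
         (\<Sum>xs\<in>step_seqs d n. card (inner_boundary d (walk_range xs n)))"
proof -
  have "(\<Sum>k\<le>n. esc d k * esc d (n - k)) \<le> (\<Sum>k\<le>n. card {xs \<in> step_seqs d n. k \<in> Kset xs n})"
  proof (rule sum_mono)
    fix k assume "k \<in> {..n}" then have kn: "k \<le> n" by simp
    let ?R = "(\<lambda>ys. rev (map uminus ys)) ` escset d k"
    have injr: "inj_on (\<lambda>ys. rev (map uminus ys)) (escset d k)"
    proof -
      show ?thesis
      proof (rule inj_onI)
        fix a b :: "(nat \<Rightarrow> int) list"
        assume "rev (map uminus a) = rev (map uminus b)"
        then have "map uminus (map uminus a) = map uminus (map uminus b)" by simp
        then show "a = b" by (simp add: comp_def)
      qed
    qed
    have Rsub: "?R \<subseteq> step_seqs d k"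
      by (auto simp: escset_def step_seqs_def intro!: U_uminus)
    have "esc d k * esc d (n - k) = card ?R * card (escset d (n - k))"
      unfolding esc_def using injr by (simp add: card_image)
    also have "\<dots> = card ((\<lambda>(ys, zs). ys @ zs) ` (?R \<times> escset d (n - k)))"
      by (rule card_append_image[OF Rsub finite_escset, symmetric])
    also have "\<dots> \<le> card {xs \<in> step_seqs d n. k \<in> Kset xs n}"
    proof (rule card_mono)
      show "finite {xs \<in> step_seqs d n. k \<in> Kset xs n}" by (simp add: finite_W)
      show "(\<lambda>(ys, zs). ys @ zs) ` (?R \<times> escset d (n - k)) \<subseteq> {xs \<in> step_seqs d n. k \<in> Kset xs n}"
        using Kset_member[OF _ _ kn] by auto
    qed
    finally show "esc d k * esc d (n - k) \<le> card {xs \<in> step_seqs d n. k \<in> Kset xs n}" .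
  qed
  also have "\<dots> = (\<Sum>xs\<in>step_seqs d n. card (Kset xs n))" by (rule Kset_sum[symmetric])
  also have "\<dots> \<le> (\<Sum>xs\<in>step_seqs d n. card (inner_boundary d (walk_range xs n)))"
    by (rule sum_mono) (rule card_Kset[OF d])
  finally show ?thesis .
qed

definition units :: "nat set \<Rightarrow> (nat \<Rightarrow> int) set" where
  "units I = {(\<lambda>j. if j = i then s else 0) | i s. i \<in> I \<and> (s = 1 \<or> s = -1)}"

lemma unit_steps_units: "unit_steps d = units {..<d}"
  unfolding unit_steps_def units_def by simp

fun cnt :: "nat set \<Rightarrow> nat \<Rightarrow> (nat \<Rightarrow> int) \<Rightarrow> nat" where
  "cnt I 0 x = (if \<forall>i\<in>I. x i = 0 then 1 else 0)"
| "cnt I (Suc j) x = (\<Sum>u\<in>units I. cnt I j (x - u))"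

lemma finite_units: "finite I \<Longrightarrow> finite (units I)"
proof -
  assume "finite I"
  have "units I = (\<lambda>(i,s). (\<lambda>j. if j = i then s else 0)) ` (I \<times> {1,-1})"
    unfolding units_def by auto
  then show ?thesis using \<open>finite I\<close> by simp
qed

lemma card_units: "card (units I) = 2 * card I"
proof -
  have eq: "units I = (\<lambda>(i,s). (\<lambda>j. if j = i then s else 0)) ` (I \<times> {1,-1::int})"
    unfolding units_def by auto
  have "inj_on (\<lambda>(i,s). (\<lambda>j. if j = i then s else (0::int))) (I \<times> {1,-1::int})"
  proof (rule inj_onI, clarify)
    fix i s i' s' assume h: "(\<lambda>j. if j = i then s else (0::int)) = (\<lambda>j. if j = i' then s' else 0)"
      and s: "s \<in> {1,-1}" "s' \<in> {1,-1}"
    have "i = i'"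
    proof (rule ccontr)
      assume "i \<noteq> i'"
      then have "(if i = i then s else 0) = (if i = i' then s' else (0::int))" using fun_cong[OF h, of i] by simp
      then show False using s \<open>i \<noteq> i'\<close> by auto
    qed
    moreover have "s = s'" using fun_cong[OF h, of i] \<open>i = i'\<close> by simp
    ultimately show "i = i' \<and> s = s'" by simp
  qed
  then have "card (units I) = card (I \<times> {1,-1::int})" unfolding eq by (rule card_image)
  then show ?thesis by (cases "finite I") (simp_all add: card_cartesian_product)
qed

lemma units_zero_outside: "u \<in> units J \<Longrightarrow> i \<notin> J \<Longrightarrow> u i = 0"
  unfolding units_def by auto

lemma units_Un: "units (I \<union> J) = units I \<union> units J"
  unfolding units_def by blast

lemma units_disjoint: "I \<inter> J = {} \<Longrightarrow> units I \<inter> units J = {}"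
proof (rule ccontr)
  assume dis: "I \<inter> J = {}" and "units I \<inter> units J \<noteq> {}"
  then obtain u where uI: "u \<in> units I" and uJ: "u \<in> units J" by blast
  from uI obtain i s where u: "u = (\<lambda>j. if j = i then s else 0)" "i \<in> I" "s = 1 \<or> s = -1"
    unfolding units_def by blast
  have "i \<notin> J" using dis u(2) by blast
  then have "u i = 0" using units_zero_outside[OF uJ] by simp
  then show False using u by auto
qed

lemma cnt_local: "(\<And>i. i \<in> I \<Longrightarrow> x i = y i) \<Longrightarrow> cnt I m x = cnt I m y"
proof (induction m arbitrary: x y)
  case 0 then show ?case by simp
next
  case (Suc m)
  show ?case unfolding cnt.simps
    by (rule sum.cong[OF refl], rule Suc.IH) (simp add: Suc.prems)
qed

lemma cnt_le_pow: "finite I \<Longrightarrow> cnt I m x \<le> (2 * card I) ^ m"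
proof (induction m arbitrary: x)
  case 0 then show ?case by simp
next
  case (Suc m)
  have "cnt I (Suc m) x \<le> (\<Sum>u\<in>units I. (2 * card I) ^ m)"
    unfolding cnt.simps by (rule sum_mono) (rule Suc.IH[OF Suc.prems])
  also have "\<dots> = (2 * card I) ^ Suc m" by (simp add: card_units)
  finally show ?case .
qed

lemma binom_shift:
  fixes h :: "nat \<Rightarrow> nat \<Rightarrow> nat"
  shows "(\<Sum>m\<le>Suc j. (Suc j choose m) * h m (Suc j - m)) =
         (\<Sum>m\<le>j. (j choose m) * h (Suc m) (j - m)) + (\<Sum>m\<le>j. (j choose m) * h m (Suc j - m))"
proof -
  have "(\<Sum>m\<le>Suc j. (Suc j choose m) * h m (Suc j - m))
      = h 0 (Suc j) + (\<Sum>m\<le>j. (Suc j choose Suc m) * h (Suc m) (j - m))"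
    by (subst sum.atMost_Suc_shift) simp
  also have "\<dots> = h 0 (Suc j) + (\<Sum>m\<le>j. (j choose m) * h (Suc m) (j - m))
                 + (\<Sum>m\<le>j. (j choose Suc m) * h (Suc m) (j - m))"
    by (simp add: sum.distrib algebra_simps)
  also have "h 0 (Suc j) + (\<Sum>m\<le>j. (j choose Suc m) * h (Suc m) (j - m))
           = (\<Sum>m\<le>j. (j choose m) * h m (Suc j - m))"
  proof (cases j)
    case 0 then show ?thesis by simp
  next
    case (Suc j')
    have "(\<Sum>m\<le>j. (j choose m) * h m (Suc j - m)) = h 0 (Suc j) + (\<Sum>m\<le>j'. (j choose Suc m) * h (Suc m) (j - m))"
      unfolding Suc by (subst sum.atMost_Suc_shift) simp
    moreover have "(\<Sum>m\<le>j. (j choose Suc m) * h (Suc m) (j - m)) = (\<Sum>m\<le>j'. (j choose Suc m) * h (Suc m) (j - m))"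
      unfolding Suc by simp
    ultimately show ?thesis by simp
  qed
  ultimately show ?thesis by (simp add: algebra_simps)
qed

lemma cnt_conv:
  assumes fI: "finite I" and fJ: "finite J" and dis: "I \<inter> J = {}"
  shows "cnt (I \<union> J) j x = (\<Sum>m\<le>j. (j choose m) * cnt I m x * cnt J (j - m) x)"
proof (induction j arbitrary: x)
  case 0 then show ?case by auto
next
  case (Suc j)
  have uI: "\<And>u l. u \<in> units I \<Longrightarrow> cnt J l (x - u) = cnt J l x"
    by (rule cnt_local) (use units_zero_outside dis in auto)
  have uJ: "\<And>u l. u \<in> units J \<Longrightarrow> cnt I l (x - u) = cnt I l x"
    by (rule cnt_local) (use units_zero_outside dis in auto)
  have "cnt (I \<union> J) (Suc j) x = (\<Sum>u\<in>units I. cnt (I \<union> J) j (x - u)) + (\<Sum>u\<in>units J. cnt (I \<union> J) j (x - u))"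
    unfolding cnt.simps units_Un
    by (rule sum.union_disjoint) (simp_all add: finite_units fI fJ units_disjoint[OF dis])
  also have "(\<Sum>u\<in>units I. cnt (I \<union> J) j (x - u)) = (\<Sum>m\<le>j. (j choose m) * cnt I (Suc m) x * cnt J (j - m) x)"
  proof -
    have "(\<Sum>u\<in>units I. cnt (I \<union> J) j (x - u)) = (\<Sum>u\<in>units I. \<Sum>m\<le>j. (j choose m) * cnt I m (x - u) * cnt J (j - m) x)"
    proof (rule sum.cong[OF refl])
      fix u assume u: "u \<in> units I"
      show "cnt (I \<union> J) j (x - u) = (\<Sum>m\<le>j. (j choose m) * cnt I m (x - u) * cnt J (j - m) x)"
        unfolding Suc.IH[of "x - u"] uI[OF u] ..
    qed
    also have "\<dots> = (\<Sum>m\<le>j. \<Sum>u\<in>units I. (j choose m) * cnt I m (x - u) * cnt J (j - m) x)"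
      by (rule sum.swap)
    also have "\<dots> = (\<Sum>m\<le>j. (j choose m) * cnt I (Suc m) x * cnt J (j - m) x)"
      by (simp add: sum_distrib_left sum_distrib_right)
    finally show ?thesis .
  qed
  also have "(\<Sum>u\<in>units J. cnt (I \<union> J) j (x - u)) = (\<Sum>m\<le>j. (j choose m) * cnt I m x * cnt J (Suc j - m) x)"
  proof -
    have "(\<Sum>u\<in>units J. cnt (I \<union> J) j (x - u)) = (\<Sum>u\<in>units J. \<Sum>m\<le>j. (j choose m) * cnt I m x * cnt J (j - m) (x - u))"
    proof (rule sum.cong[OF refl])
      fix u assume u: "u \<in> units J"
      show "cnt (I \<union> J) j (x - u) = (\<Sum>m\<le>j. (j choose m) * cnt I m x * cnt J (j - m) (x - u))"
        unfolding Suc.IH[of "x - u"] uJ[OF u] ..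
    qed
    also have "\<dots> = (\<Sum>m\<le>j. \<Sum>u\<in>units J. (j choose m) * cnt I m x * cnt J (j - m) (x - u))"
      by (rule sum.swap)
    also have "\<dots> = (\<Sum>m\<le>j. (j choose m) * cnt I m x * cnt J (Suc j - m) x)"
    proof (rule sum.cong[OF refl])
      fix m assume "m \<in> {..j}"
      then have "Suc j - m = Suc (j - m)" by simp
      then show "(\<Sum>u\<in>units J. (j choose m) * cnt I m x * cnt J (j - m) (x - u)) = (j choose m) * cnt I m x * cnt J (Suc j - m) x"
        by (simp add: sum_distrib_left)
    qed
    finally show ?thesis .
  qed
  also have "(\<Sum>m\<le>j. (j choose m) * cnt I (Suc m) x * cnt J (j - m) x) + (\<Sum>m\<le>j. (j choose m) * cnt I m x * cnt J (Suc j - m) x)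
      = (\<Sum>m\<le>Suc j. (Suc j choose m) * cnt I m x * cnt J (Suc j - m) x)"
    using binom_shift[of j "\<lambda>m l. cnt I m x * cnt J l x"] by (simp add: mult.assoc)
  finally show ?case .
qed

lemma hitc_le_cnt: "hitc d j x \<le> cnt {..<d} j x"
proof (induction j arbitrary: x)
  case 0
  have "hitset d 0 x \<subseteq> (if x = 0 then {[]} else {})"
    by (auto simp: hitset_def step_seqs_def)
  then have "hitc d 0 x \<le> card (if x = 0 then {[]} else ({} :: (nat \<Rightarrow> int) list set))"
    unfolding hitc_def by (intro card_mono) auto
  show ?case
  proof (cases "x = 0")
    case True
    have "cnt {..<d} 0 x = 1" using True by simp
    moreover have "hitc d 0 x \<le> 1" using \<open>hitc d 0 x \<le> _\<close> True by (simp only: if_True card_insert_disjoint) simp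
    ultimately show ?thesis by simp
  next
    case False
    then show ?thesis using \<open>hitc d 0 x \<le> _\<close> by simp
  qed
next
  case (Suc j)
  have sub: "hitset d (Suc j) x \<subseteq> (\<Union>u\<in>unit_steps d. (\<lambda>ws. ws @ [u]) ` hitset d j (x - u))"
  proof
    fix ws assume ws: "ws \<in> hitset d (Suc j) x"
    then have len: "length ws = Suc j" and su: "set ws \<subseteq> unit_steps d" and wp: "walk_pos ws (Suc j) = x"
      by (auto simp: hitset_def step_seqs_def)
    define u where "u = ws ! j"
    have ws_eq: "ws = take j ws @ [u]"
      using len unfolding u_def by (metis append_butlast_last_id butlast_conv_take diff_Suc_1 last_conv_nth length_greater_0_conv zero_less_Suc)
    have uU: "u \<in> unit_steps d" using su len unfolding u_def by auto
    have lt: "length (take j ws) = j" using len by simp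
    have "walk_pos ws (Suc j) = walk_pos (take j ws) j + u"
      using wp_append_right[of "take j ws" "[u]" 1] ws_eq lt by (simp add: wp_Suc)
    then have "walk_pos (take j ws) j = x - u" using wp by (simp add: algebra_simps)
    moreover have "take j ws \<in> step_seqs d j" using lt su by (auto simp: step_seqs_def dest: in_set_takeD)
    ultimately have "take j ws \<in> hitset d j (x - u)" by (simp add: hitset_def)
    then show "ws \<in> (\<Union>u\<in>unit_steps d. (\<lambda>ws. ws @ [u]) ` hitset d j (x - u))"
      using uU ws_eq by blast
  qed
  have "hitc d (Suc j) x \<le> card (\<Union>u\<in>unit_steps d. (\<lambda>ws. ws @ [u]) ` hitset d j (x - u))"
    unfolding hitc_def by (rule card_mono[OF _ sub]) (simp add: finite_U finite_hitset)
  also have "\<dots> \<le> (\<Sum>u\<in>unit_steps d. card ((\<lambda>ws. ws @ [u]) ` hitset d j (x - u)))"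
    by (rule card_UN_le[OF finite_U])
  also have "\<dots> \<le> (\<Sum>u\<in>unit_steps d. hitc d j (x - u))"
    unfolding hitc_def by (rule sum_mono) (rule card_image_le[OF finite_hitset])
  also have "\<dots> \<le> (\<Sum>u\<in>unit_steps d. cnt {..<d} j (x - u))"
    by (rule sum_mono) (rule Suc.IH)
  also have "\<dots> = cnt {..<d} (Suc j) x" by (simp add: unit_steps_units)
  finally show ?case .
qed

definition F1 :: "nat \<Rightarrow> int \<Rightarrow> nat" where
  "F1 k y = (\<Sum>m\<le>k. (k choose m) * (if 2 * int m - int k = y then 1 else 0))"

lemma F1_0: "F1 0 y = (if y = 0 then 1 else 0)"
  by (simp add: F1_def)

lemma F1_Suc: "F1 (Suc k) y = F1 k (y - 1) + F1 k (y + 1)"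
proof -
  have "F1 (Suc k) y = (\<Sum>m\<le>Suc k. (Suc k choose m) * (if int m - int (Suc k - m) = y then 1 else 0))"
    unfolding F1_def by (rule sum.cong[OF refl]) (auto simp: of_nat_diff)
  also have "\<dots> = (\<Sum>m\<le>k. (k choose m) * (if int (Suc m) - int (k - m) = y then 1 else 0))
        + (\<Sum>m\<le>k. (k choose m) * (if int m - int (Suc k - m) = y then 1 else 0))"
    using binom_shift[of k "\<lambda>m l. if int m - int l = y then 1 else 0"] by simp
  also have "(\<Sum>m\<le>k. (k choose m) * (if int (Suc m) - int (k - m) = y then 1 else 0)) = F1 k (y - 1)"
    unfolding F1_def by (rule sum.cong[OF refl]) (auto simp: of_nat_diff)
  also have "(\<Sum>m\<le>k. (k choose m) * (if int m - int (Suc k - m) = y then 1 else 0)) = F1 k (y + 1)"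
    unfolding F1_def by (rule sum.cong[OF refl]) (auto simp: of_nat_diff)
  finally show ?thesis .
qed

lemma F1_le: "F1 k y \<le> k choose (k div 2)"
proof -
  let ?P = "\<lambda>m. 2 * int m - int k = y"
  have "F1 k y \<le> (\<Sum>m\<le>k. (k choose (k div 2)) * (if ?P m then 1 else 0))"
    unfolding F1_def by (rule sum_mono) (simp add: binomial_maximum)
  also have "\<dots> = (k choose (k div 2)) * card {m \<in> {..k}. ?P m}"
    by (simp add: sum_distrib_left[symmetric] sum_indicator_card)
  also have "card {m \<in> {..k}. ?P m} \<le> 1"
  proof -
    have "\<forall>a\<in>{m \<in> {..k}. ?P m}. \<forall>b\<in>{m \<in> {..k}. ?P m}. a = b" by auto
    then show ?thesis using card_le_Suc0_iff_eq[of "{m \<in> {..k}. ?P m}"] by simp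
  qed
  then have "(k choose (k div 2)) * card {m \<in> {..k}. ?P m} \<le> k choose (k div 2)" by simp
  finally show ?thesis .
qed

definition pe :: "nat \<Rightarrow> int \<Rightarrow> (nat \<Rightarrow> int)" where "pe i s = (\<lambda>j. if j = i then s else 0)"

lemma units_single: "units {i} = {pe i 1, pe i (-1)}"
  unfolding units_def pe_def by auto

lemma pe_ne: "pe i 1 \<noteq> pe i (-1)"
proof
  assume "pe i 1 = pe i (-1)" then have "pe i 1 i = pe i (-1) i" by simp
  then show False by (simp add: pe_def)
qed

lemma sum_units_single: "(\<Sum>u\<in>units {i}. f u) = f (pe i 1) + f (pe i (-1))"
  unfolding units_single using pe_ne by simp

lemma cnt_1: "cnt {i} k x = F1 k (x i)"
proof (induction k arbitrary: x)
  case 0 then show ?case by (simp add: F1_0)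
next
  case (Suc k)
  have "cnt {i} (Suc k) x = F1 k ((x - pe i 1) i) + F1 k ((x - pe i (-1)) i)"
    by (simp only: cnt.simps sum_units_single Suc.IH)
  also have "\<dots> = F1 k (x i - 1) + F1 k (x i + 1)" by (simp add: pe_def)
  finally show ?case by (simp add: F1_Suc)
qed

lemma cnt_2:
  assumes "i \<noteq> i'"
  shows "cnt {i, i'} k x = F1 k (x i + x i') * F1 k (x i - x i')"
proof (induction k arbitrary: x)
  case 0 then show ?case by (auto simp: F1_0)
next
  case (Suc k)
  have U: "units {i, i'} = units {i} \<union> units {i'}" using units_Un[of "{i}" "{i'}"] by (simp add: insert_commute)
  have D: "units {i} \<inter> units {i'} = {}" by (rule units_disjoint) (use assms in simp)
  define a where "a = x i + x i'"
  define b where "b = x i - x i'"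
  have e1: "(x - pe i 1) i + (x - pe i 1) i' = a - 1" "(x - pe i 1) i - (x - pe i 1) i' = b - 1"
    using assms by (simp_all add: pe_def a_def b_def)
  have e2: "(x - pe i (-1)) i + (x - pe i (-1)) i' = a + 1" "(x - pe i (-1)) i - (x - pe i (-1)) i' = b + 1"
    using assms by (simp_all add: pe_def a_def b_def)
  have e3: "(x - pe i' 1) i + (x - pe i' 1) i' = a - 1" "(x - pe i' 1) i - (x - pe i' 1) i' = b + 1"
    using assms by (simp_all add: pe_def a_def b_def)
  have e4: "(x - pe i' (-1)) i + (x - pe i' (-1)) i' = a + 1" "(x - pe i' (-1)) i - (x - pe i' (-1)) i' = b - 1"
    using assms by (simp_all add: pe_def a_def b_def)
  have "cnt {i, i'} (Suc k) x = (\<Sum>u\<in>units {i}. cnt {i, i'} k (x - u)) + (\<Sum>u\<in>units {i'}. cnt {i, i'} k (x - u))"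
    by (simp only: cnt.simps U, rule sum.union_disjoint) (simp_all add: finite_units D)
  also have "\<dots> = F1 k (a - 1) * F1 k (b - 1) + F1 k (a + 1) * F1 k (b + 1)
      + (F1 k (a - 1) * F1 k (b + 1) + F1 k (a + 1) * F1 k (b - 1))"
    by (simp only: sum_units_single Suc.IH e1 e2 e3 e4)
  also have "\<dots> = F1 (Suc k) a * F1 (Suc k) b"
    by (simp add: F1_Suc algebra_simps)
  finally show ?case by (simp add: a_def b_def)
qed

lemma wcs:
  fixes w f g :: "'a \<Rightarrow> real"
  assumes "\<And>i. i \<in> A \<Longrightarrow> w i \<ge> 0"
  shows "(\<Sum>i\<in>A. w i * f i * g i)\<^sup>2 \<le> (\<Sum>i\<in>A. w i * (f i)\<^sup>2) * (\<Sum>i\<in>A. w i * (g i)\<^sup>2)"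
proof -
  have "(\<Sum>i\<in>A. w i * f i * g i) = (\<Sum>i\<in>A. (sqrt (w i) * f i) * (sqrt (w i) * g i))"
    by (rule sum.cong[OF refl]) (use assms in \<open>simp add: algebra_simps real_sqrt_mult_self\<close>)
  moreover have "(\<Sum>i\<in>A. w i * (f i)\<^sup>2) = (\<Sum>i\<in>A. (sqrt (w i) * f i)\<^sup>2)"
    by (rule sum.cong[OF refl]) (use assms in \<open>simp add: power_mult_distrib\<close>)
  moreover have "(\<Sum>i\<in>A. w i * (g i)\<^sup>2) = (\<Sum>i\<in>A. (sqrt (w i) * g i)\<^sup>2)"
    by (rule sum.cong[OF refl]) (use assms in \<open>simp add: power_mult_distrib\<close>)
  ultimately show ?thesis using Cauchy_Schwarz_ineq_sum by simp
qed

lemma binom_ratio: "real ((2*Suc k) choose Suc k) * (k + 1) = 2 * (2 * k + 1) * real ((2*k) choose k)"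
proof -
  define a where "a = real ((2*Suc k) choose Suc k)"
  define bv where "bv = real (Suc (2*k) choose Suc k)"
  define c where "c = real ((2*k) choose k)"
  have r1: "(Suc (2*k)) * ((2*k) choose k) = (Suc (2*k) choose Suc k) * Suc k"
    by (rule Suc_times_binomial_eq)
  have r2: "Suc (Suc (2*k)) * (Suc (2*k) choose k) = (Suc (Suc (2*k)) choose Suc k) * Suc k"
    by (rule Suc_times_binomial_eq)
  have sym: "Suc (2*k) choose k = Suc (2*k) choose Suc k"
    using binomial_symmetric[of k "Suc (2*k)"] by simp
  have e: "2 * Suc k = Suc (Suc (2*k))" by simp
  have h1: "real (Suc (2*k)) * c = bv * real (Suc k)"
    unfolding c_def bv_def of_nat_mult[symmetric] r1 ..
  have h2: "real (Suc (Suc (2*k))) * bv = a * real (Suc k)"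
    unfolding a_def bv_def of_nat_mult[symmetric] e sym[symmetric] r2 ..
  have "a * (k + 1) = 2 * ((k+1) * bv)" using h2 by (simp add: algebra_simps)
  also have "(k+1) * bv = (2*k+1) * c" using h1 by (simp add: algebra_simps)
  finally show ?thesis unfolding a_def c_def by (simp add: algebra_simps)
qed

lemma central_binom_bound: "real ((2*k) choose k)^2 * (3 * real k + 1) \<le> 16 ^ k"
proof (induction k)
  case 0 then show ?case by simp
next
  case (Suc k)
  define c where "c = real ((2*k) choose k)"
  define c' where "c' = real ((2*Suc k) choose Suc k)"
  define r where "r = real k"
  have r0: "r \<ge> 0" unfolding r_def by simp
  have key: "c' * (r + 1) = 2 * (2 * r + 1) * c" using binom_ratio[of k] unfolding c_def c'_def r_def
    by (simp only: of_nat_add of_nat_1 of_nat_mult of_nat_numeral)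
  have IH: "c^2 * (3*r+1) \<le> 16^k" using Suc.IH unfolding c_def r_def .
  have "c'^2 * (3 * r + 4) * ((r+1)^2 * (3*r+1)) = 4 * (2*r+1)^2 * (3*r+4) * (c^2 * (3*r+1))"
  proof -
    have "(c' * (r+1))^2 = (2 * (2 * r + 1) * c)^2" using key by simp
    then have "c'^2 * (r+1)^2 = 4 * (2*r+1)^2 * c^2" by (simp add: power_mult_distrib power2_eq_square algebra_simps)
    then show ?thesis by (simp add: algebra_simps)
  qed
  also have "\<dots> \<le> 4 * (2*r+1)^2 * (3*r+4) * 16^k"
    using IH r0 by (intro mult_left_mono) auto
  also have "\<dots> \<le> 16 * 16^k * ((r+1)^2 * (3*r+1))"
  proof -
    have "(2*r+1)^2 * (3*r+4) \<le> 4 * (r+1)^2 * (3*r+1)" using r0 by (simp add: power2_eq_square algebra_simps)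
    then have "4 * ((2*r+1)^2 * (3*r+4)) * (16::real)^k \<le> 4 * (4 * (r+1)^2 * (3*r+1)) * 16^k"
      by (intro mult_right_mono[OF mult_left_mono]) auto
    then show ?thesis by (simp add: algebra_simps)
  qed
  finally have "c'^2 * (3 * r + 4) * ((r+1)^2 * (3*r+1)) \<le> (16 * 16^k) * ((r+1)^2 * (3*r+1))" .
  then have "c'^2 * (3 * r + 4) \<le> 16 * 16^k"
    by (rule mult_right_le_imp_le) (use r0 in auto)
  then show ?case unfolding c'_def r_def by (simp add: algebra_simps)
qed

lemma B_bound: "real (k choose (k div 2))^2 * (real k + 1) \<le> 2 * 4 ^ k"
proof (cases "even k")
  case True
  then obtain t where k: "k = 2 * t" by blast
  have "real (k choose (k div 2))^2 * (real k + 1) = real ((2*t) choose t)^2 * (2 * real t + 1)"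
    unfolding k by simp
  also have "\<dots> \<le> real ((2*t) choose t)^2 * (3 * real t + 1)"
    by (intro mult_left_mono) auto
  also have "\<dots> \<le> 16 ^ t" by (rule central_binom_bound)
  also have "\<dots> = 4 ^ k" unfolding k by (simp add: power_mult)
  also have "\<dots> \<le> 2 * 4 ^ k" by simp
  finally show ?thesis .
next
  case False
  then obtain t where k: "k = 2 * t + 1" using oddE by blast
  have kd: "k div 2 = t" unfolding k by simp
  have r: "(Suc (2*t)) * ((2*t) choose t) = (Suc (2*t) choose Suc t) * Suc t"
    by (rule Suc_times_binomial_eq)
  have sym: "Suc (2*t) choose t = Suc (2*t) choose Suc t"
    using binomial_symmetric[of t "Suc (2*t)"] by simp
  have "real (Suc (2*t) choose t) * (real t + 1) = (2 * real t + 1) * real ((2*t) choose t)"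
  proof -
    have "real (Suc (2*t) choose t) * real (Suc t) = real (Suc (2*t)) * real ((2*t) choose t)"
      unfolding of_nat_mult[symmetric] sym r ..
    then show ?thesis by (simp add: add.commute)
  qed
  then have le2: "real (Suc (2*t) choose t) \<le> 2 * real ((2*t) choose t)"
  proof -
    assume h: "real (Suc (2*t) choose t) * (real t + 1) = (2 * real t + 1) * real ((2*t) choose t)"
    have "(2 * real t + 1) * real ((2*t) choose t) \<le> (2 * real ((2*t) choose t)) * (real t + 1)"
      by (simp add: algebra_simps)
    then have "real (Suc (2*t) choose t) * (real t + 1) \<le> (2 * real ((2*t) choose t)) * (real t + 1)"
      using h by simp
    then show ?thesis by (rule mult_right_le_imp_le) auto
  qed
  have "real (k choose (k div 2))^2 * (real k + 1) = real (Suc (2*t) choose t)^2 * (2 * real t + 2)"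
    unfolding kd unfolding k by simp
  also have "\<dots> \<le> (2 * real ((2*t) choose t))^2 * (2 * (3 * real t + 1))"
    using le2 by (intro mult_mono power_mono) auto
  also have "\<dots> = 8 * (real ((2*t) choose t)^2 * (3 * real t + 1))" by (simp add: power2_eq_square algebra_simps)
  also have "\<dots> \<le> 8 * 16 ^ t" using central_binom_bound[of t] by simp
  also have "\<dots> = 2 * 4 ^ k" unfolding k by (simp add: power_mult power_add)
  finally show ?thesis .
qed

lemma cnt1_bound: "real (cnt {i} k x)^2 * (real k + 1) \<le> 2 * 4 ^ k"
proof -
  have "real (cnt {i} k x) \<le> real (k choose (k div 2))" unfolding cnt_1 using F1_le by simp
  then have "real (cnt {i} k x)^2 * (real k + 1) \<le> real (k choose (k div 2))^2 * (real k + 1)"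
    by (intro mult_right_mono power_mono) auto
  also have "\<dots> \<le> 2 * 4 ^ k" by (rule B_bound)
  finally show ?thesis .
qed

lemma cnt2_bound: "i \<noteq> i' \<Longrightarrow> real (cnt {i, i'} k x) * (real k + 1) \<le> 2 * 4 ^ k"
proof -
  assume ne: "i \<noteq> i'"
  have "real (cnt {i, i'} k x) \<le> real (k choose (k div 2))^2"
    unfolding cnt_2[OF ne] power2_eq_square of_nat_mult[symmetric] of_nat_le_iff
    by (intro mult_mono F1_le) auto
  then have "real (cnt {i, i'} k x) * (real k + 1) \<le> real (k choose (k div 2))^2 * (real k + 1)"
    by (intro mult_right_mono) auto
  also have "\<dots> \<le> 2 * 4 ^ k" by (rule B_bound)
  finally show ?thesis .
qed

lemma binsum: "(\<Sum>m\<le>j. real (j choose m) * a ^ m * b ^ (j - m)) = (a + b) ^ j"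
  using binomial_ring[of a b j] by simp

lemma shift_le:
  fixes g :: "nat \<Rightarrow> real"
  assumes "\<And>k. g k \<ge> 0"
  shows "(\<Sum>m\<le>j. g (Suc m)) \<le> (\<Sum>k\<le>Suc j. g k)"
proof -
  have "(\<Sum>k\<le>Suc j. g k) = g 0 + (\<Sum>m\<le>j. g (Suc m))" by (rule sum.atMost_Suc_shift)
  then show ?thesis using assms[of 0] by linarith
qed

lemma choose_div: "real (j choose m) / (real m + 1) = real (Suc j choose Suc m) / (real j + 1)"
proof -
  have "real (Suc m) * real (Suc j choose Suc m) = real (Suc j) * real (j choose m)"
    unfolding of_nat_mult[symmetric] by (rule arg_cong[OF Suc_times_binomial])
  then show ?thesis by (simp add: field_simps)
qed

lemma hlp: "(a::real) > 0 \<Longrightarrow> c * a ^ Suc m * b / (J * a) = c / J * a ^ m * b"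
  by (cases "J = 0") (simp_all add: field_simps)

lemma hlp2: "(a::real) > 0 \<Longrightarrow> c * a ^ Suc m * b / K / (J * a) = c / J * a ^ m * b / K"
  by (cases "J = 0"; cases "K = 0") (simp_all add: field_simps)

lemma E1:
  fixes a b :: real
  assumes a: "a > 0" and b: "b \<ge> 0"
  shows "(\<Sum>m\<le>j. real (j choose m) * a ^ m * b ^ (j - m) / (real m + 1)) \<le> (a + b) ^ (j + 1) / ((real j + 1) * a)"
proof -
  let ?g = "\<lambda>k. real (Suc j choose k) * a ^ k * b ^ (Suc j - k)"
  have "(\<Sum>m\<le>j. real (j choose m) * a ^ m * b ^ (j - m) / (real m + 1)) = (\<Sum>m\<le>j. ?g (Suc m) / ((real j + 1) * a))"
  proof (rule sum.cong[OF refl])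
    fix m assume "m \<in> {..j}"
    have "real (j choose m) * a ^ m * b ^ (j - m) / (real m + 1) = (real (j choose m) / (real m + 1)) * a ^ m * b ^ (j - m)"
      by simp
    also have "\<dots> = real (Suc j choose Suc m) / (real j + 1) * a ^ m * b ^ (j - m)" by (simp only: choose_div)
    also have "\<dots> = ?g (Suc m) / ((real j + 1) * a)" using hlp[OF a, of "real (Suc j choose Suc m)" m "b ^ (j - m)" "real j + 1"] by simp
    finally show "real (j choose m) * a ^ m * b ^ (j - m) / (real m + 1) = ?g (Suc m) / ((real j + 1) * a)" .
  qed
  also have "\<dots> = (\<Sum>m\<le>j. ?g (Suc m)) / ((real j + 1) * a)" by (simp add: sum_divide_distrib)
  also have "\<dots> \<le> (\<Sum>k\<le>Suc j. ?g k) / ((real j + 1) * a)"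
    by (intro divide_right_mono shift_le) (use a b in auto)
  also have "(\<Sum>k\<le>Suc j. ?g k) = (a + b) ^ (j + 1)" using binsum[of "Suc j" a b] by simp
  finally show ?thesis .
qed

lemma E1r:
  fixes a b :: real
  assumes a: "a \<ge> 0" and b: "b > 0"
  shows "(\<Sum>m\<le>j. real (j choose m) * a ^ m * b ^ (j - m) / (real (j - m) + 1)) \<le> (a + b) ^ (j + 1) / ((real j + 1) * b)"
proof -
  have "(\<Sum>m\<le>j. real (j choose m) * a ^ m * b ^ (j - m) / (real (j - m) + 1))
      = (\<Sum>m\<le>j. real (j choose m) * b ^ m * a ^ (j - m) / (real m + 1))"
  proof -
    have "(\<Sum>m\<le>j. real (j choose m) * a ^ m * b ^ (j - m) / (real (j - m) + 1))
        = (\<Sum>m\<in>{0..j}. real (j choose m) * a ^ m * b ^ (j - m) / (real (j - m) + 1))"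
      by (simp add: atLeast0AtMost)
    also have "\<dots> = (\<Sum>m\<in>{0..j}. real (j choose (j - m)) * a ^ (j - m) * b ^ (j - (j - m)) / (real (j - (j - m)) + 1))"
      by (subst sum.atLeastAtMost_rev) simp
    also have "\<dots> = (\<Sum>m\<in>{0..j}. real (j choose m) * b ^ m * a ^ (j - m) / (real m + 1))"
      by (rule sum.cong[OF refl]) (auto simp: binomial_symmetric[symmetric])
    finally show ?thesis by (simp add: atLeast0AtMost)
  qed
  also have "\<dots> \<le> (b + a) ^ (j + 1) / ((real j + 1) * b)" by (rule E1[OF b a])
  finally show ?thesis by (simp add: add.commute)
qed

lemma E2:
  fixes a b :: real
  assumes a: "a > 0" and b: "b \<ge> 0"
  shows "(\<Sum>m\<le>j. real (j choose m) * a ^ m * b ^ (j - m) / ((real m + 1) * (real m + 2)))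
         \<le> (a + b) ^ (j + 2) / ((real j + 1) * (real j + 2) * a ^ 2)"
proof -
  let ?h = "\<lambda>k. real (Suc j choose k) * a ^ k * b ^ (Suc j - k) / (real k + 1)"
  have "(\<Sum>m\<le>j. real (j choose m) * a ^ m * b ^ (j - m) / ((real m + 1) * (real m + 2))) = (\<Sum>m\<le>j. ?h (Suc m) / ((real j + 1) * a))"
  proof (rule sum.cong[OF refl])
    fix m assume "m \<in> {..j}"
    have "real (j choose m) * a ^ m * b ^ (j - m) / ((real m + 1) * (real m + 2))
        = (real (j choose m) / (real m + 1)) * a ^ m * b ^ (j - m) / (real m + 2)"
      by simp
    also have "\<dots> = real (Suc j choose Suc m) / (real j + 1) * a ^ m * b ^ (j - m) / (real m + 2)" by (simp only: choose_div)
    also have "\<dots> = ?h (Suc m) / ((real j + 1) * a)" using hlp2[OF a, of "real (Suc j choose Suc m)" m "b ^ (j - m)" "real m + 2" "real j + 1"] by (simp add: add.commute)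
    finally show "real (j choose m) * a ^ m * b ^ (j - m) / ((real m + 1) * (real m + 2)) = ?h (Suc m) / ((real j + 1) * a)" .
  qed
  also have "\<dots> = (\<Sum>m\<le>j. ?h (Suc m)) / ((real j + 1) * a)" by (simp add: sum_divide_distrib)
  also have "\<dots> \<le> (\<Sum>k\<le>Suc j. ?h k) / ((real j + 1) * a)"
    by (intro divide_right_mono shift_le) (use a b in auto)
  also have "\<dots> \<le> ((a + b) ^ (Suc j + 1) / ((real (Suc j) + 1) * a)) / ((real j + 1) * a)"
    by (intro divide_right_mono E1[OF a b]) (use a in auto)
  also have "\<dots> = (a + b) ^ (j + 2) / ((real j + 1) * (real j + 2) * a ^ 2)"
    by (simp add: field_simps power2_eq_square)
  finally show ?thesis .
qed

lemma split01: "(d::nat) \<ge> 2 \<Longrightarrow> {..<d} = {0, 1} \<union> {2..<d}"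
  by auto

lemma split2: "(d::nat) \<ge> 3 \<Longrightarrow> {2..<d} = {2} \<union> {3..<d}"
  by auto

lemma cntA_bound: "real (cnt {0, 1} m x) \<le> 2 * 4 ^ m / (real m + 1)"
  using cnt2_bound[of 0 1 m x] by (simp add: field_simps)

lemma cnt_conv_real:
  assumes "finite I" "finite J" "I \<inter> J = {}"
  shows "real (cnt (I \<union> J) j x) = (\<Sum>m\<le>j. real (j choose m) * real (cnt I m x) * real (cnt J (j - m) x))"
  unfolding cnt_conv[OF assms] by simp

lemma cnt_pow_real: "finite I \<Longrightarrow> real (cnt I m x) \<le> (2 * real (card I)) ^ m"
proof -
  assume "finite I"
  then have "cnt I m x \<le> (2 * card I) ^ m" by (rule cnt_le_pow)
  then have "real (cnt I m x) \<le> real ((2 * card I) ^ m)" by (simp only: of_nat_le_iff)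
  then show ?thesis by simp
qed

lemma LB1:
  assumes d: "d \<ge> 2"
  shows "real (hitc d j x) * (real j + 1) \<le> real d * (2 * real d) ^ j"
proof -
  define b where "b = 2 * real (d - 2)"
  have b0: "b \<ge> 0" unfolding b_def by simp
  have db: "4 + b = 2 * real d" unfolding b_def using d by (simp add: of_nat_diff)
  have "real (hitc d j x) \<le> real (cnt {..<d} j x)" using hitc_le_cnt by simp
  also have "\<dots> = (\<Sum>m\<le>j. real (j choose m) * real (cnt {0,1} m x) * real (cnt {2..<d} (j - m) x))"
    unfolding split01[OF d] by (rule cnt_conv_real) auto
  also have "\<dots> \<le> (\<Sum>m\<le>j. real (j choose m) * (2 * 4 ^ m / (real m + 1)) * b ^ (j - m))"
  proof (rule sum_mono)
    fix m assume "m \<in> {..j}"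
    have "real (cnt {2..<d} (j - m) x) \<le> b ^ (j - m)" using cnt_pow_real[of "{2..<d}" "j - m" x] unfolding b_def by simp
    then show "real (j choose m) * real (cnt {0,1} m x) * real (cnt {2..<d} (j - m) x) \<le> real (j choose m) * (2 * 4 ^ m / (real m + 1)) * b ^ (j - m)"
      using cntA_bound[of m x] b0 by (intro mult_mono) auto
  qed
  also have "\<dots> = 2 * (\<Sum>m\<le>j. real (j choose m) * 4 ^ m * b ^ (j - m) / (real m + 1))"
    by (simp add: sum_distrib_left algebra_simps)
  also have "\<dots> \<le> 2 * ((4 + b) ^ (j + 1) / ((real j + 1) * 4))"
    using E1[of 4 b j] b0 by simp
  also have "\<dots> = real d * (2 * real d) ^ j / (real j + 1)"
    unfolding db by (simp add: field_simps)
  finally show ?thesis by (simp add: field_simps)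
qed

definition Qs :: "nat \<Rightarrow> (nat \<Rightarrow> int) \<Rightarrow> nat \<Rightarrow> real" where
  "Qs d x l = (\<Sum>k\<le>l. real (l choose k) * real (cnt {2} k x) * (2 * real (d - 3)) ^ (l - k))"

lemma Q1:
  assumes d: "d \<ge> 3"
  shows "real (cnt {2..<d} l x) \<le> Qs d x l"
proof -
  have "real (cnt {2..<d} l x) = (\<Sum>k\<le>l. real (l choose k) * real (cnt {2} k x) * real (cnt {3..<d} (l - k) x))"
    unfolding split2[OF d] by (rule cnt_conv_real) auto
  also have "\<dots> \<le> Qs d x l" unfolding Qs_def
  proof (rule sum_mono)
    fix k assume "k \<in> {..l}"
    have "real (cnt {3..<d} (l - k) x) \<le> (2 * real (d - 3)) ^ (l - k)" using cnt_pow_real[of "{3..<d}" "l - k" x] by simp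
    then show "real (l choose k) * real (cnt {2} k x) * real (cnt {3..<d} (l - k) x) \<le> real (l choose k) * real (cnt {2} k x) * (2 * real (d - 3)) ^ (l - k)"
      by (intro mult_left_mono) auto
  qed
  finally show ?thesis .
qed

lemma cnt1_sq: "(real (cnt {i} k x) / 2 ^ k)^2 \<le> 2 / (real k + 1)"
proof -
  have "real (cnt {i} k x)^2 \<le> 2 * 4 ^ k / (real k + 1)" using cnt1_bound[of i k x] by (simp add: field_simps)
  then have "real (cnt {i} k x)^2 / 4 ^ k \<le> 2 / (real k + 1)" by (simp add: field_simps)
  moreover have "(real (cnt {i} k x) / 2 ^ k)^2 = real (cnt {i} k x)^2 / 4 ^ k"
    by (simp add: power_divide power_mult[symmetric] mult.commute[of k 2] power_mult)
  ultimately show ?thesis by simp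
qed

lemma aux2: "2 * ((A::real) / (L * 2)) * B = A * B / L"
  by (cases "L = 0") (simp_all add: field_simps)

lemma Q2:
  assumes d: "d \<ge> 3"
  shows "(Qs d x l)^2 \<le> (2 * real (d - 2)) ^ (2 * l + 1) / (real l + 1)"
proof -
  define c where "c = 2 * real (d - 3)"
  have c0: "c \<ge> 0" unfolding c_def by simp
  have bc: "2 + c = 2 * real (d - 2)" unfolding c_def using d by (simp add: of_nat_diff)
  define w where "w k = real (l choose k) * 2 ^ k * c ^ (l - k)" for k
  define f where "f k = real (cnt {2} k x) / 2 ^ k" for k
  have w0: "\<And>k. w k \<ge> 0" unfolding w_def using c0 by simp
  have "Qs d x l = (\<Sum>k\<le>l. w k * f k * 1)"
    unfolding Qs_def w_def f_def c_def by (rule sum.cong[OF refl]) simp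
  then have "(Qs d x l)^2 \<le> (\<Sum>k\<le>l. w k * (f k)^2) * (\<Sum>k\<le>l. w k * 1^2)"
    using wcs[of "{..l}" w f "\<lambda>_. 1"] w0 by simp
  also have "(\<Sum>k\<le>l. w k * 1^2) = (2 + c) ^ l" unfolding w_def using binsum[of l 2 c] by simp
  also have "(\<Sum>k\<le>l. w k * (f k)^2) \<le> (\<Sum>k\<le>l. w k * (2 / (real k + 1)))"
  proof (rule sum_mono)
    fix k assume "k \<in> {..l}"
    show "w k * (f k)^2 \<le> w k * (2 / (real k + 1))"
      unfolding f_def by (rule mult_left_mono[OF cnt1_sq w0])
  qed
  also have "\<dots> = 2 * (\<Sum>k\<le>l. real (l choose k) * 2 ^ k * c ^ (l - k) / (real k + 1))"
    unfolding sum_distrib_left by (rule sum.cong[OF refl]) (simp add: w_def)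
  also have "\<dots> \<le> 2 * ((2 + c) ^ (l + 1) / ((real l + 1) * 2))"
    using E1[of 2 c l] c0 by simp
  finally have "(Qs d x l)^2 \<le> 2 * ((2 + c) ^ (l + 1) / ((real l + 1) * 2)) * (2 + c) ^ l"
    using c0 by (simp add: mult_right_mono)
  also have "\<dots> = (2 + c) ^ (l + 1) * (2 + c) ^ l / (real l + 1)"
    by (rule aux2)
  also have "(2 + c) ^ (l + 1) * (2 + c) ^ l = (2 + c) ^ (2 * l + 1)"
    by (simp add: power_add[symmetric] mult_2)
  finally show ?thesis unfolding bc .
qed

lemma aux3: "8 * ((X::real) / (A * B * 4 ^ 2)) = X / (2 * A * B)"
  by (cases "A = 0"; cases "B = 0") (simp_all add: field_simps)

lemma aux4: "(b::real) > 0 \<Longrightarrow> b ^ (n + 1) / L / b ^ n = b / L"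
  by (cases "L = 0") (simp_all add: field_simps)

lemma aux5: "(b::real) > 0 \<Longrightarrow> b * (X / (J * b)) = X / J"
  by (cases "J = 0") (simp_all add: field_simps)

lemma aux6: "(J::real) > 0 \<Longrightarrow> K > 0 \<Longrightarrow> (A / (2 * J * K)) * (B / J) * J ^ 3 = A * B / 2 * (J / K)"
  by (simp add: field_simps power3_eq_cube)

lemma LB2:
  assumes d: "d \<ge> 3"
  shows "real (hitc d j x)^2 * (real j + 1)^3 \<le> 4 * real d ^ 3 * (2 * real d) ^ (2 * j)"
proof -
  define b where "b = 2 * real (d - 2)"
  define D where "D = 2 * real d"
  have b0: "b > 0" unfolding b_def using d by simp
  have db: "4 + b = D" unfolding b_def D_def using d by (simp add: of_nat_diff)
  define w where "w m = real (j choose m) * 4 ^ m * b ^ (j - m)" for m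
  define f where "f m = real (cnt {0,1} m x) / 4 ^ m" for m
  define g where "g m = Qs d x (j - m) / b ^ (j - m)" for m
  have w0: "\<And>m. w m \<ge> 0" unfolding w_def using b0 by simp
  have Q0: "\<And>l. Qs d x l \<ge> 0" unfolding Qs_def by (intro sum_nonneg) simp
  have "real (hitc d j x) \<le> real (cnt {..<d} j x)" using hitc_le_cnt by simp
  also have "\<dots> = (\<Sum>m\<le>j. real (j choose m) * real (cnt {0,1} m x) * real (cnt {2..<d} (j - m) x))"
  proof -
    have "{..<d} = {0, 1} \<union> {2..<d}" using d by (intro split01) simp
    then show ?thesis by (simp only:) (rule cnt_conv_real, auto)
  qed
  also have "\<dots> \<le> (\<Sum>m\<le>j. real (j choose m) * real (cnt {0,1} m x) * Qs d x (j - m))"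
    by (rule sum_mono) (intro mult_left_mono Q1[OF d]; simp)
  also have "\<dots> = (\<Sum>m\<le>j. w m * f m * g m)"
    by (rule sum.cong[OF refl]) (use b0 in \<open>simp add: w_def f_def g_def\<close>)
  finally have le1: "real (hitc d j x) \<le> (\<Sum>m\<le>j. w m * f m * g m)" .
  have "real (hitc d j x)^2 \<le> (\<Sum>m\<le>j. w m * f m * g m)^2"
    by (rule power_mono[OF le1]) simp
  also have "\<dots> \<le> (\<Sum>m\<le>j. w m * (f m)^2) * (\<Sum>m\<le>j. w m * (g m)^2)"
    using wcs[of "{..j}" w f g] w0 by simp
  also have "\<dots> \<le> (D ^ (j + 2) / (2 * (real j + 1) * (real j + 2))) * (D ^ (j + 1) / (real j + 1))"
  proof (rule mult_mono)
    have "(\<Sum>m\<le>j. w m * (f m)^2) \<le> (\<Sum>m\<le>j. w m * (8 / ((real m + 1) * (real m + 2))))"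
    proof (rule sum_mono)
      fix m assume "m \<in> {..j}"
      have f0: "f m \<ge> 0" unfolding f_def by simp
      have f1: "f m \<le> 2 / (real m + 1)" unfolding f_def using cntA_bound[of m x] by (simp add: field_simps)
      have "(f m)^2 \<le> (2 / (real m + 1))^2" by (rule power_mono[OF f1 f0])
      also have "\<dots> \<le> 8 / ((real m + 1) * (real m + 2))"
      proof -
        have p: "(real m + 1) > 0" "(real m + 2) > 0" by simp_all
        have "4 * ((real m + 1) * (real m + 2)) \<le> 8 * ((real m + 1) * (real m + 1))"
          by (simp add: algebra_simps)
        then show ?thesis using p by (simp add: power2_eq_square divide_simps)
      qed
      finally show "w m * (f m)^2 \<le> w m * (8 / ((real m + 1) * (real m + 2)))"
        by (rule mult_left_mono[OF _ w0])
    qed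
    also have "\<dots> = 8 * (\<Sum>m\<le>j. real (j choose m) * 4 ^ m * b ^ (j - m) / ((real m + 1) * (real m + 2)))"
      unfolding sum_distrib_left by (rule sum.cong[OF refl]) (simp add: w_def)
    also have "\<dots> \<le> 8 * ((4 + b) ^ (j + 2) / ((real j + 1) * (real j + 2) * 4 ^ 2))"
      by (rule mult_left_mono[OF E2]) (use b0 in auto)
    also have "\<dots> = D ^ (j + 2) / (2 * (real j + 1) * (real j + 2))"
      unfolding db by (rule aux3)
    finally show "(\<Sum>m\<le>j. w m * (f m)^2) \<le> D ^ (j + 2) / (2 * (real j + 1) * (real j + 2))" .
    have "(\<Sum>m\<le>j. w m * (g m)^2) \<le> (\<Sum>m\<le>j. w m * (b / (real (j - m) + 1)))"
    proof (rule sum_mono)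
      fix m assume "m \<in> {..j}"
      have "(g m)^2 = (Qs d x (j - m))^2 / b ^ (2 * (j - m))"
        unfolding g_def by (simp add: power_divide power_mult[symmetric] mult.commute)
      also have "\<dots> \<le> (b ^ (2 * (j - m) + 1) / (real (j - m) + 1)) / b ^ (2 * (j - m))"
        using Q2[OF d, of x "j - m"] b0 unfolding b_def by (intro divide_right_mono) auto
      also have "\<dots> = b / (real (j - m) + 1)" using b0 by (rule aux4)
      finally show "w m * (g m)^2 \<le> w m * (b / (real (j - m) + 1))"
        by (rule mult_left_mono[OF _ w0])
    qed
    also have "\<dots> = b * (\<Sum>m\<le>j. real (j choose m) * 4 ^ m * b ^ (j - m) / (real (j - m) + 1))"
      unfolding sum_distrib_left by (rule sum.cong[OF refl]) (simp add: w_def)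
    also have "\<dots> \<le> b * ((4 + b) ^ (j + 1) / ((real j + 1) * b))"
      using E1r[of 4 b j] b0 by (intro mult_left_mono) auto
    also have "\<dots> = D ^ (j + 1) / (real j + 1)"
      unfolding db using b0 by (rule aux5)
    finally show "(\<Sum>m\<le>j. w m * (g m)^2) \<le> D ^ (j + 1) / (real j + 1)" .
    show "0 \<le> (\<Sum>m\<le>j. w m * (g m)^2)" using w0 by (intro sum_nonneg) simp
    show "0 \<le> D ^ (j + 2) / (2 * (real j + 1) * (real j + 2))" unfolding D_def by simp
  qed
  finally have sq: "real (hitc d j x)^2 \<le> (D ^ (j + 2) / (2 * (real j + 1) * (real j + 2))) * (D ^ (j + 1) / (real j + 1))" .
  have e: "(j + 2) + (j + 1) = 2 * j + 3" by simp
  have pw: "D ^ (j + 2) * D ^ (j + 1) = D ^ (2 * j) * D ^ 3"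
    by (simp only: power_add[symmetric] e)
  have "real (hitc d j x)^2 * (real j + 1)^3 \<le> (D ^ (j + 2) / (2 * (real j + 1) * (real j + 2))) * (D ^ (j + 1) / (real j + 1)) * (real j + 1)^3"
    by (rule mult_right_mono[OF sq]) simp
  also have "\<dots> = D ^ (j + 2) * D ^ (j + 1) / 2 * ((real j + 1) / (real j + 2))"
    by (rule aux6) simp_all
  also have "\<dots> = D ^ (2 * j) * D ^ 3 / 2 * ((real j + 1) / (real j + 2))"
    unfolding pw ..
  also have "\<dots> \<le> D ^ (2 * j) * D ^ 3 / 2 * 1"
    by (intro mult_left_mono) (auto simp: D_def)
  also have "\<dots> = 4 * real d ^ 3 * (2 * real d) ^ (2 * j)"
    unfolding D_def by (simp add: power_mult_distrib)
  finally show ?thesis .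
qed

lemma ln_lower: "x > 0 \<Longrightarrow> 1 - 1 / x \<le> ln (x::real)"
proof -
  assume x: "x > 0"
  have "ln (1 / x) \<le> 1 / x - 1" using x by (intro ln_le_minus_one) simp
  moreover have "ln (1 / x) = - ln x" using x by (simp add: ln_div)
  ultimately show ?thesis by simp
qed

lemma harm_bound: "(\<Sum>j\<le>M. 1 / (real j + 1)) \<le> 1 + ln (real M + 1)"
proof (induction M)
  case 0 then show ?case by simp
next
  case (Suc M)
  have "1 / (real M + 2) \<le> ln (real M + 2) - ln (real M + 1)"
  proof -
    have "1 - 1 / ((real M + 2) / (real M + 1)) \<le> ln ((real M + 2) / (real M + 1))"
      by (rule ln_lower) simp
    moreover have "1 - 1 / ((real M + 2) / (real M + 1)) = 1 / (real M + 2)" by (simp add: field_simps)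
    moreover have "ln ((real M + 2) / (real M + 1)) = ln (real M + 2) - ln (real M + 1)"
      by (rule ln_divide_pos) simp_all
    ultimately show ?thesis by simp
  qed
  then show ?case using Suc.IH by (simp add: add.commute add.left_commute)
qed

lemma three_halves_step:
  fixes a c :: real
  assumes a: "a > 0" and c2: "c^2 = a^2 + 1" and c: "c > 0"
  shows "1 / (c^2 * c) \<le> 2 / a - 2 / c"
proof -
  have ac: "a < c" using c2 c by (intro power_less_imp_less_base[of a 2 c]) simp_all
  have h: "(c - a) * (c + a) = 1" using c2 by (simp add: algebra_simps power2_eq_square)
  have e1: "2 / a - 2 / c = 2 * (c - a) / (a * c)" using a c by (simp add: field_simps)
  have e2: "c - a = 1 / (c + a)" using h a c by (simp add: eq_divide_eq)
  have "2 / a - 2 / c = 2 / (a * c * (c + a))"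
    unfolding e1 e2 by simp
  moreover have "a * c * (c + a) \<le> 2 * (c^2 * c)"
  proof -
    have "a * (c + a) \<le> c * (c + c)" using ac a by (intro mult_mono) auto
    then have "a * c * (c + a) \<le> c * (c * (c + c))" using c
      by (metis mult.assoc mult.commute mult_left_mono less_imp_le)
    then show ?thesis by (simp add: power2_eq_square algebra_simps)
  qed
  moreover have "2 / (2 * (c^2 * c)) \<le> 2 / (a * c * (c + a))"
    by (rule divide_left_mono[OF \<open>a * c * (c + a) \<le> 2 * (c^2 * c)\<close>]) (use a c in simp_all)
  ultimately show ?thesis by simp
qed

lemma three_halves: "(\<Sum>j\<le>M. 1 / ((real j + 1) * sqrt (real j + 1))) \<le> 3 - 2 / sqrt (real M + 1)"
proof (induction M)
  case 0 then show ?case by simp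
next
  case (Suc M)
  define a where "a = sqrt (real M + 1)"
  define c where "c = sqrt (real M + 2)"
  have a: "a > 0" unfolding a_def by simp
  have c: "c > 0" unfolding c_def by simp
  have c2: "c^2 = a^2 + 1" unfolding a_def c_def by simp
  have "1 / ((real (Suc M) + 1) * sqrt (real (Suc M) + 1)) = 1 / (c^2 * c)"
    unfolding c_def by (simp add: add.commute)
  also have "\<dots> \<le> 2 / a - 2 / c" by (rule three_halves_step[OF a c2 c])
  finally have st: "1 / ((real (Suc M) + 1) * sqrt (real (Suc M) + 1)) \<le> 2 / a - 2 / c" .
  have "2 / sqrt (real (Suc M) + 1) = 2 / c" unfolding c_def by (simp add: add.commute)
  then show ?case using Suc.IH st unfolding a_def by simp
qed

definition fq :: "nat \<Rightarrow> nat \<Rightarrow> real" where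
  "fq d m = real (esc d m) / (2 * real d) ^ m"

definition Pj :: "nat \<Rightarrow> nat \<Rightarrow> real" where
  "Pj d j = (real (hitc d j 0) + real (hitc d j e0)) / (2 * real d) ^ j"

lemma fq_nonneg: "fq d m \<ge> 0" unfolding fq_def by simp

lemma Pj_nonneg: "Pj d j \<ge> 0" unfolding Pj_def by simp

lemma fq_le1: "d \<ge> 1 \<Longrightarrow> fq d m \<le> 1"
proof -
  assume d: "d \<ge> 1"
  have "esc d m \<le> card (step_seqs d m)" unfolding esc_def
    by (rule card_mono[OF finite_W]) (auto simp: escset_def)
  then have "real (esc d m) \<le> (2 * real d) ^ m" unfolding card_W
    by (metis of_nat_le_iff of_nat_mult of_nat_numeral of_nat_power)
  then show ?thesis unfolding fq_def using d by (simp add: divide_le_eq)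
qed

lemma fq_anti: assumes d: "d \<ge> 1" and mm: "m \<le> m'" shows "fq d m' \<le> fq d m"
proof -
  obtain t where t: "m' = m + t" using mm le_Suc_ex by blast
  have "esc d (m + t) \<le> (2 * d) ^ t * esc d m" by (rule esc_mono)
  then have "real (esc d (m + t)) \<le> (2 * real d) ^ t * real (esc d m)"
    by (metis of_nat_le_iff of_nat_mult of_nat_numeral of_nat_power)
  then have "real (esc d (m + t)) / (2 * real d) ^ (m + t) \<le> (2 * real d) ^ t * real (esc d m) / (2 * real d) ^ (m + t)"
    using d by (intro divide_right_mono) auto
  also have "\<dots> = real (esc d m) / (2 * real d) ^ m" using d by (simp add: power_add field_simps)
  finally show ?thesis unfolding fq_def t .
qed

lemma LE_real:
  assumes d: "d \<ge> 1"
  shows "1 \<le> (\<Sum>j\<le>M. Pj d j * fq d (M - j))"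
proof -
  let ?N = "2 * real d"
  have N0: "?N > 0" using d by simp
  have "real ((2 * d) ^ M) \<le> real (\<Sum>j\<le>M. (hitc d j 0 + hitc d j e0) * esc d (M - j))"
    by (simp only: of_nat_le_iff last_exit)
  then have "?N ^ M \<le> (\<Sum>j\<le>M. (real (hitc d j 0) + real (hitc d j e0)) * real (esc d (M - j)))"
    by simp
  then have "1 \<le> (\<Sum>j\<le>M. (real (hitc d j 0) + real (hitc d j e0)) * real (esc d (M - j))) / ?N ^ M"
    using N0 by simp
  also have "\<dots> = (\<Sum>j\<le>M. Pj d j * fq d (M - j))"
    unfolding sum_divide_distrib
  proof (rule sum.cong[OF refl])
    fix j assume "j \<in> {..M}"
    then have "?N ^ M = ?N ^ j * ?N ^ (M - j)" by (metis atMost_iff le_add_diff_inverse power_add)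
    then show "(real (hitc d j 0) + real (hitc d j e0)) * real (esc d (M - j)) / ?N ^ M = Pj d j * fq d (M - j)"
      unfolding Pj_def fq_def by simp
  qed
  finally show ?thesis .
qed

lemma aux7: "(B::real) \<noteq> 0 \<Longrightarrow> J > 0 \<Longrightarrow> (A * B / J + A * B / J) / B = 2 * A / J"
  by (simp add: field_simps)

lemma aux8: "(B::real) \<noteq> 0 \<Longrightarrow> J > 0 \<Longrightarrow> (A * B / J + A * B / J) / B = 2 * A / J"
  by (simp add: field_simps)

lemma Pj_le1:
  assumes d: "d \<ge> 2"
  shows "Pj d j \<le> 2 * real d / (real j + 1)"
proof -
  have N0: "2 * real d > 0" using d by simp
  have h: "real (hitc d j y) \<le> real d * (2 * real d) ^ j / (real j + 1)" for y
    using LB1[OF d, of j y] by (simp add: field_simps)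
  have "Pj d j \<le> (real d * (2 * real d) ^ j / (real j + 1) + real d * (2 * real d) ^ j / (real j + 1)) / (2 * real d) ^ j"
    unfolding Pj_def using N0 by (intro divide_right_mono add_mono h) auto
  also have "\<dots> = 2 * real d / (real j + 1)" using N0 by (intro aux7) auto
  finally show ?thesis .
qed

lemma Pj_le2:
  assumes d: "d \<ge> 3"
  shows "Pj d j \<le> 2 * sqrt (4 * real d ^ 3) / ((real j + 1) * sqrt (real j + 1))"
proof -
  let ?N = "2 * real d"
  have N0: "?N > 0" using d by simp
  have h: "real (hitc d j y) \<le> sqrt (4 * real d ^ 3) * ?N ^ j / ((real j + 1) * sqrt (real j + 1))" for y
  proof -
    have sq: "real (hitc d j y)^2 * (real j + 1)^3 \<le> 4 * real d ^ 3 * ?N ^ (2 * j)" by (rule LB2[OF d])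
    have "real (hitc d j y) * ((real j + 1) * sqrt (real j + 1)) = sqrt ((real (hitc d j y))^2 * (real j + 1)^3)"
      by (simp add: real_sqrt_mult power3_eq_cube real_sqrt_mult_self)
    also have "\<dots> \<le> sqrt (4 * real d ^ 3 * ?N ^ (2 * j))" by (rule real_sqrt_le_mono[OF sq])
    also have "\<dots> = sqrt (4 * real d ^ 3) * ?N ^ j"
      by (simp add: real_sqrt_mult power_mult[symmetric] mult.commute[of 2 j] power_mult)
    finally have fin: "real (hitc d j y) * ((real j + 1) * sqrt (real j + 1)) \<le> sqrt (4 * real d ^ 3) * ?N ^ j" .
    have Q: "(real j + 1) * sqrt (real j + 1) > 0" by simp
    show ?thesis by (subst pos_le_divide_eq[OF Q]) (rule fin)
  qed
  have "Pj d j \<le> (sqrt (4 * real d ^ 3) * ?N ^ j / ((real j + 1) * sqrt (real j + 1))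
                 + sqrt (4 * real d ^ 3) * ?N ^ j / ((real j + 1) * sqrt (real j + 1))) / ?N ^ j"
    unfolding Pj_def using N0 by (intro divide_right_mono add_mono h) auto
  also have "\<dots> = 2 * sqrt (4 * real d ^ 3) / ((real j + 1) * sqrt (real j + 1))"
    using N0 by (intro aux7) auto
  finally show ?thesis .
qed

lemma esc_lower:
  assumes d: "d \<ge> 2" and U: "(\<Sum>j\<le>4 * d * m + m. Pj d j) \<le> U"
  shows "1 \<le> 2 * (fq d m * U)"
proof -
  define T where "T = 4 * d * m"
  define M where "M = T + m"
  have d1: "d \<ge> 1" using d by simp
  have "1 \<le> (\<Sum>j\<le>M. Pj d j * fq d (M - j))" by (rule LE_real[OF d1])
  also have "\<dots> = (\<Sum>j\<le>T. Pj d j * fq d (M - j)) + (\<Sum>j = Suc T..T + m. Pj d j * fq d (M - j))"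
    unfolding M_def by (rule sum_up_index_split)
  also have "(\<Sum>j\<le>T. Pj d j * fq d (M - j)) \<le> fq d m * U"
  proof -
    have "(\<Sum>j\<le>T. Pj d j * fq d (M - j)) \<le> (\<Sum>j\<le>T. Pj d j * fq d m)"
      by (rule sum_mono) (intro mult_left_mono fq_anti[OF d1] Pj_nonneg, auto simp: M_def)
    also have "\<dots> = fq d m * (\<Sum>j\<le>T. Pj d j)" by (simp add: sum_distrib_left mult.commute)
    also have "(\<Sum>j\<le>T. Pj d j) \<le> (\<Sum>j\<le>M. Pj d j)"
      unfolding M_def sum_up_index_split by (simp add: sum_nonneg Pj_nonneg)
    then have "fq d m * (\<Sum>j\<le>T. Pj d j) \<le> fq d m * U"
      using U unfolding M_def T_def by (intro mult_left_mono fq_nonneg) auto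
    finally show ?thesis .
  qed
  also have "(\<Sum>j = Suc T..T + m. Pj d j * fq d (M - j)) \<le> 1 / 2"
  proof -
    have "(\<Sum>j = Suc T..T + m. Pj d j * fq d (M - j)) \<le> (\<Sum>j = Suc T..T + m. 2 * real d / (real T + 2))"
    proof (rule sum_mono)
      fix j assume j: "j \<in> {Suc T..T + m}"
      have "Pj d j * fq d (M - j) \<le> Pj d j * 1"
        by (intro mult_left_mono fq_le1[OF d1] Pj_nonneg)
      also have "\<dots> \<le> 2 * real d / (real j + 1)" using Pj_le1[OF d] by simp
      also have "\<dots> \<le> 2 * real d / (real T + 2)"
        using j d by (intro divide_left_mono) auto
      finally show "Pj d j * fq d (M - j) \<le> 2 * real d / (real T + 2)" .
    qed
    also have "\<dots> = real m * (2 * real d) / (real T + 2)" by simp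
    also have "\<dots> \<le> 1 / 2"
    proof -
      have "real m * (2 * real d) * 2 \<le> real T + 2" unfolding T_def by simp
      then show ?thesis by (simp add: divide_simps)
    qed
    finally show ?thesis .
  qed
  finally show ?thesis by simp
qed

lemma EB_lower:
  assumes d: "d \<ge> 2"
  shows "(real n + 1) * (fq d n)^2 \<le> expected_boundary d n"
proof -
  let ?N = "2 * real d"
  have N0: "?N > 0" using d by simp
  have d1: "d \<ge> 1" using d by simp
  have "(real n + 1) * (fq d n)^2 = (\<Sum>k\<le>n. fq d n * fq d n)" by (simp add: power2_eq_square)
  also have "\<dots> \<le> (\<Sum>k\<le>n. fq d k * fq d (n - k))"
    by (rule sum_mono) (intro mult_mono fq_anti[OF d1] fq_nonneg; simp)
  also have "\<dots> = real (\<Sum>k\<le>n. esc d k * esc d (n - k)) / ?N ^ n"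
    unfolding of_nat_sum sum_divide_distrib
  proof (rule sum.cong[OF refl])
    fix k assume "k \<in> {..n}"
    then have "?N ^ n = ?N ^ k * ?N ^ (n - k)" by (metis atMost_iff le_add_diff_inverse power_add)
    then show "fq d k * fq d (n - k) = real (esc d k * esc d (n - k)) / ?N ^ n"
      unfolding fq_def by simp
  qed
  also have "\<dots> \<le> real (\<Sum>xs\<in>step_seqs d n. card (inner_boundary d (walk_range xs n))) / ?N ^ n"
    using N0 by (intro divide_right_mono) (simp_all only: of_nat_le_iff boundary_lower[OF d1], simp)
  also have "\<dots> = expected_boundary d n" unfolding expected_boundary_def by simp
  finally show ?thesis .
qed

lemma ln_n_bound:
  assumes n: "n \<ge> (2::nat)"
  shows "1 + ln (real (9 * n) + 1) \<le> 7 * ln (real n)"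
proof -
  have l2: "1 / 2 \<le> ln (2::real)" using ln_lower[of 2] by simp
  have ln2n: "ln 2 \<le> ln (real n)" using n by simp
  have "ln (real (9 * n) + 1) \<le> ln (16 * real n)" using n by simp
  also have "\<dots> = ln 16 + ln (real n)" using n by (simp add: ln_mult)
  also have "ln (16::real) = 4 * ln 2" using ln_realpow[of 2 4] by simp
  finally show ?thesis using l2 ln2n by linarith
qed

lemma fq2_lower:
  assumes n: "n \<ge> 2"
  shows "1 \<le> fq 2 n * (56 * ln (real n))"
proof -
  have S: "(\<Sum>j\<le>4 * 2 * n + n. Pj 2 j) \<le> 4 * (1 + ln (real (9 * n) + 1))"
  proof -
    have e: "4 * 2 * n + n = 9 * n" by simp
    have "(\<Sum>j\<le>4 * 2 * n + n. Pj 2 j) \<le> (\<Sum>j\<le>9 * n. 4 * (1 / (real j + 1)))"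
      unfolding e by (rule sum_mono) (use Pj_le1[of 2] in simp)
    also have "\<dots> = 4 * (\<Sum>j\<le>9 * n. 1 / (real j + 1))" by (simp add: sum_distrib_left)
    also have "\<dots> \<le> 4 * (1 + ln (real (9 * n) + 1))" using harm_bound[of "9 * n"] by simp
    finally show ?thesis .
  qed
  have "1 \<le> 2 * (fq 2 n * (4 * (1 + ln (real (9 * n) + 1))))" by (rule esc_lower[OF _ S]) simp
  also have "\<dots> \<le> 2 * (fq 2 n * (4 * (7 * ln (real n))))"
    using ln_n_bound[OF n] fq_nonneg by (intro mult_left_mono) auto
  finally show ?thesis by simp
qed

lemma fq3_lower:
  assumes d: "d \<ge> 3"
  shows "1 \<le> fq d m * (12 * sqrt (4 * real d ^ 3))"
proof -
  define K where "K = sqrt (4 * real d ^ 3)"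
  have K0: "K \<ge> 0" unfolding K_def by simp
  have S: "(\<Sum>j\<le>4 * d * m + m. Pj d j) \<le> 6 * K"
  proof -
    have "(\<Sum>j\<le>4 * d * m + m. Pj d j) \<le> (\<Sum>j\<le>4 * d * m + m. 2 * K * (1 / ((real j + 1) * sqrt (real j + 1))))"
      by (rule sum_mono) (use Pj_le2[OF d] in \<open>simp add: K_def\<close>)
    also have "\<dots> = 2 * K * (\<Sum>j\<le>4 * d * m + m. 1 / ((real j + 1) * sqrt (real j + 1)))"
      by (simp add: sum_distrib_left)
    also have "\<dots> \<le> 2 * K * 3"
    proof (rule mult_left_mono)
      have "(\<Sum>j\<le>4 * d * m + m. 1 / ((real j + 1) * sqrt (real j + 1))) \<le> 3 - 2 / sqrt (real (4 * d * m + m) + 1)"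
        by (rule three_halves)
      also have "\<dots> \<le> 3" by simp
      finally show "(\<Sum>j\<le>4 * d * m + m. 1 / ((real j + 1) * sqrt (real j + 1))) \<le> 3" .
      show "0 \<le> 2 * K" using K0 by simp
    qed
    finally show ?thesis by simp
  qed
  have "1 \<le> 2 * (fq d m * (6 * K))" by (rule esc_lower[OF _ S]) (use d in simp)
  then show ?thesis unfolding K_def by simp
qed

theorem mainTheorem4:
  fixes d :: nat
  assumes "d \<ge> 2"
  shows "\<exists>c>0. \<forall>n::nat. n \<ge> 2 \<longrightarrow>
           expected_boundary d n \<ge>
             (if d = 2 then c * real n / (ln (real n))^2 else c * real n)"
proof (cases "d = 2")
  case True
  show ?thesis
  proof (rule exI[of _ "1 / 3136"], intro conjI allI impI)
    show "(0::real) < 1 / 3136" by simp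
    fix n :: nat assume n: "n \<ge> 2"
    have lnpos: "ln (real n) > 0" using n by simp
    have f: "1 / (56 * ln (real n)) \<le> fq 2 n"
      using fq2_lower[OF n] lnpos by (simp add: divide_simps mult.commute)
    have f2: "(1 / (56 * ln (real n)))^2 \<le> (fq 2 n)^2"
      by (rule power_mono[OF f]) (use lnpos in simp)
    have "1 / 3136 * real n / (ln (real n))^2 = real n * (1 / (56 * ln (real n)))^2"
      by (simp add: power2_eq_square field_simps)
    also have "\<dots> \<le> (real n + 1) * (fq 2 n)^2"
      by (intro mult_mono f2) auto
    also have "\<dots> \<le> expected_boundary 2 n" by (rule EB_lower) simp
    finally show "expected_boundary d n \<ge> (if d = 2 then 1 / 3136 * real n / (ln (real n))^2 else 1 / 3136 * real n)"
      using True by simp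
  qed
next
  case False
  then have d: "d \<ge> 3" using assms by simp
  define K where "K = sqrt (4 * real d ^ 3)"
  have K0: "K > 0" unfolding K_def using d by simp
  have K2: "K^2 = 4 * real d ^ 3" unfolding K_def by simp
  show ?thesis
  proof (rule exI[of _ "1 / (144 * K^2)"], intro conjI allI impI)
    show "0 < 1 / (144 * K^2)" using K0 by simp
    fix n :: nat assume n: "n \<ge> 2"
    have f: "1 / (12 * K) \<le> fq d n"
      using fq3_lower[OF d, of n] K0 unfolding K_def[symmetric] by (simp add: divide_simps mult.commute)
    have f2: "(1 / (12 * K))^2 \<le> (fq d n)^2"
      by (rule power_mono[OF f]) (use K0 in simp)
    have "1 / (144 * K^2) * real n = real n * (1 / (12 * K))^2"
      by (simp add: power2_eq_square field_simps)
    also have "\<dots> \<le> (real n + 1) * (fq d n)^2"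
      by (intro mult_mono f2) auto
    also have "\<dots> \<le> expected_boundary d n" by (rule EB_lower) (use d in simp)
    finally show "expected_boundary d n \<ge> (if d = 2 then 1 / (144 * K^2) * real n / (ln (real n))^2 else 1 / (144 * K^2) * real n)"
      using False by simp
  qed
qed

end
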